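(* Let $i\in\{1,2,3,4\}$ and let $M\in\mathcal{X}_i$. Then either $M$ has a minor isomorphic to some matroid in $\mathcal{N}_i$, or $M\in\mathcal{X}_{i+1}$.
   Context: A partial field is a pair $(R,G)$, $R$ a commutative ring with unity, $G$ a subgroup of its units containing $-1$; a matroid is representable over it if it is isomorphic to $M[A]$ for a matrix $A$ with entries in $G\cup\{0\}$ whose non-zero square subdeterminants all lie in $G$ (for an $X\times Y$ matrix $A$, $M[A]$ is the matroid on $X\cup Y$ with bases $X\triangle Z$ where $|X\cap Z|=|Y\cap Z|$ and $\det A[X\cap Z,Y\cap Z]\neq0$). The Hydra partial fields are: $\mathbb{H}_1=\mathrm{GF}(5)$; $\mathbb{H}_2=(\mathbb{Z}[i,1/2],\langle i,1-i\rangle)$ with $i^2=-1$; $\mathbb{H}_3=(\mathbb{Q}(\alpha),\langle -1,\alpha,1-\alpha,\alpha^2-\alpha+1\rangle)$; $\mathbb{H}_4=(\mathbb{Q}(\alpha,\beta),\langle -1,\alpha,\beta,\alpha-1,\beta-1,\alpha\beta-1,\alpha+\beta-2\alpha\beta\rangle)$; $\mathbb{H}_5=(\mathbb{Q}(\alpha,\beta,\gamma),\langle -1,\alpha,\beta,\gamma,\alpha-1,\beta-1,\gamma-1,\alpha-\gamma,\gamma-\alpha\beta,(1-\gamma)-(1-\alpha)\beta\rangle)$, with $\alpha,\beta,\gamma$ indeterminates and $\langle\cdot\rangle$ denoting the generated multiplicative group. For $i\in\{1,\dots,5\}$, $\mathcal{X}_i$ is the set of excluded minors (matroids not $\mathbb{H}_i$-representable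 all of whose proper minors are) for the class of $\mathbb{H}_i$-representable matroids. For $i\in\{1,2,3,4\}$, $\mathcal{N}_i$ is the set of matroids in $\mathcal{X}_{i+1}$ that are $\mathbb{H}_i$-representable. *)

theory Defs
  imports Complex_Main "Jordan_Normal_Form.Determinant" "HOL-Library.Numeral_Type"
    "HOL-Computational_Algebra.Polynomial" "HOL-Computational_Algebra.Fraction_Field"
begin

text \<open>A matroid on a finite ground set, given by its set of bases.\<close>
type_synonym 'a matroid = "'a set \<times> 'a set set"

definition is_matroid :: "'a matroid \<Rightarrow> bool" where
  "is_matroid M \<longleftrightarrow> (let E = fst M; \<B> = snd M in
     finite E \<and> \<B> \<noteq> {} \<and> (\<forall>B\<in>\<B>. B \<subseteq> E) \<and>
     (\<forall>B1\<in>\<B>. \<forall>B2\<in>\<B>. \<forall>x\<in>B1 - B2. \<exists>y\<in>B2 - B1. insert y (B1 - {x}) \<in> \<B>))"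

definition indep :: "'a matroid \<Rightarrow> 'a set \<Rightarrow> bool" where
  "indep M I \<longleftrightarrow> (\<exists>B\<in>snd M. I \<subseteq> B)"

definition rk :: "'a matroid \<Rightarrow> 'a set \<Rightarrow> nat" where
  "rk M X = Max (card ` {I. I \<subseteq> X \<and> indep M I})"

text \<open>N is the minor M / C \ D, for disjoint C, D contained in the ground set.\<close>
definition minor_of :: "'a matroid \<Rightarrow> 'a matroid \<Rightarrow> bool" where
  "minor_of N M \<longleftrightarrow> (\<exists>C D. C \<subseteq> fst M \<and> D \<subseteq> fst M \<and> C \<inter> D = {} \<and>
     fst N = fst M - (C \<union> D) \<and>
     snd N = {X. X \<subseteq> fst N \<and> rk M (X \<union> C) = card X + rk M C \<and>
                 rk M (X \<union> C) = rk M (fst M - D)})"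

definition proper_minor_of :: "'a matroid \<Rightarrow> 'a matroid \<Rightarrow> bool" where
  "proper_minor_of N M \<longleftrightarrow> minor_of N M \<and> fst N \<noteq> fst M"

definition matroid_iso :: "'a matroid \<Rightarrow> 'b matroid \<Rightarrow> bool" where
  "matroid_iso M N \<longleftrightarrow> (\<exists>f. bij_betw f (fst M) (fst N) \<and> snd N = (image f) ` snd M)"

definition subdet :: "(nat \<Rightarrow> nat \<Rightarrow> 'r::comm_ring_1) \<Rightarrow> nat set \<Rightarrow> nat set \<Rightarrow> 'r" where
  "subdet A Rs Cs = det (mat (card Rs) (card Rs)
      (\<lambda>(i,j). A (sorted_list_of_set Rs ! i) (sorted_list_of_set Cs ! j)))"

text \<open>M[A] for an m x n matrix A: ground set X \<union> Y with X = Inl ` {..<m}, Y = Inr ` {..<n};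
  bases X \<triangle> Z where Z = Inl ` Rs \<union> Inr ` Cs, card Rs = card Cs and det A[Rs,Cs] \<noteq> 0.\<close>
definition matM :: "nat \<Rightarrow> nat \<Rightarrow> (nat \<Rightarrow> nat \<Rightarrow> 'r::comm_ring_1) \<Rightarrow> (nat + nat) matroid" where
  "matM m n A = (Inl ` {..<m} \<union> Inr ` {..<n},
     {Inl ` ({..<m} - Rs) \<union> Inr ` Cs | Rs Cs. Rs \<subseteq> {..<m} \<and> Cs \<subseteq> {..<n} \<and>
        card Rs = card Cs \<and> subdet A Rs Cs \<noteq> 0})"

text \<open>Representability over the partial field (R, G), R the ring type 'r.\<close>
definition pf_representable :: "'r::comm_ring_1 set \<Rightarrow> 'a matroid \<Rightarrow> bool" where
  "pf_representable G M \<longleftrightarrow> (\<exists>m n (A :: nat \<Rightarrow> nat \<Rightarrow> 'r).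
     (\<forall>i<m. \<forall>j<n. A i j \<in> G \<union> {0}) \<and>
     (\<forall>Rs Cs. Rs \<subseteq> {..<m} \<and> Cs \<subseteq> {..<n} \<and> card Rs = card Cs \<and> subdet A Rs Cs \<noteq> 0
         \<longrightarrow> subdet A Rs Cs \<in> G) \<and>
     matroid_iso M (matM m n A))"

inductive_set gen_grp :: "'r::field set \<Rightarrow> 'r set" for S where
  one: "1 \<in> gen_grp S"
| gen: "s \<in> S \<Longrightarrow> s \<in> gen_grp S"
| mult: "a \<in> gen_grp S \<Longrightarrow> b \<in> gen_grp S \<Longrightarrow> a * b \<in> gen_grp S"
| inv: "a \<in> gen_grp S \<Longrightarrow> inverse a \<in> gen_grp S"

definition a3 :: "rat poly fract" where "a3 = Fract [:0, 1:] 1"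
definition a4 :: "rat poly poly fract" where "a4 = Fract [:[:0, 1:]:] 1"
definition b4 :: "rat poly poly fract" where "b4 = Fract [:0, 1:] 1"
definition a5 :: "rat poly poly poly fract" where "a5 = Fract [:[:[:0, 1:]:]:] 1"
definition b5 :: "rat poly poly poly fract" where "b5 = Fract [:[:0, 1:]:] 1"
definition c5 :: "rat poly poly poly fract" where "c5 = Fract [:0, 1:] 1"

definition H1 :: "5 set" where "H1 = {x. x \<noteq> 0}"
definition H2 :: "complex set" where "H2 = gen_grp {\<i>, 1 - \<i>}"
definition H3 :: "rat poly fract set" where
  "H3 = gen_grp {-1, a3, 1 - a3, a3^2 - a3 + 1}"
definition H4 :: "rat poly poly fract set" where
  "H4 = gen_grp {-1, a4, b4, a4 - 1, b4 - 1, a4 * b4 - 1, a4 + b4 - 2 * a4 * b4}"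
definition H5 :: "rat poly poly poly fract set" where
  "H5 = gen_grp {-1, a5, b5, c5, a5 - 1, b5 - 1, c5 - 1, a5 - c5, c5 - a5 * b5,
                 (1 - c5) - (1 - a5) * b5}"

definition hydra_rep :: "nat \<Rightarrow> 'a matroid \<Rightarrow> bool" where
  "hydra_rep i M = (if i = 1 then pf_representable H1 M
     else if i = 2 then pf_representable H2 M
     else if i = 3 then pf_representable H3 M
     else if i = 4 then pf_representable H4 M
     else pf_representable H5 M)"

text \<open>M \<in> \<X>_i: excluded minor for the class of H_i-representable matroids.\<close>
definition excluded_minor_hydra :: "nat \<Rightarrow> 'a matroid \<Rightarrow> bool" where
  "excluded_minor_hydra i M \<longleftrightarrow> is_matroid M \<and> \<not> hydra_rep i M \<and>
     (\<forall>N. proper_minor_of N M \<longrightarrow> hydra_rep i N)"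

definition in_N :: "nat \<Rightarrow> 'a matroid \<Rightarrow> bool" where
  "in_N i N \<longleftrightarrow> excluded_minor_hydra (Suc i) N \<and> hydra_rep i N"

end

theory Submission
  imports Defs
begin


lemma indep_mono: "indep M I \<Longrightarrow> J \<subseteq> I \<Longrightarrow> indep M J"
  unfolding indep_def by blast

definition maxin :: "'a matroid \<Rightarrow> 'a set \<Rightarrow> 'a set \<Rightarrow> bool" where
  "maxin M X I \<longleftrightarrow> I \<subseteq> X \<and> indep M I \<and> (\<forall>e\<in>X - I. \<not> indep M (insert e I))"

lemma rk_eqI:
  assumes "\<exists>I. I \<subseteq> X \<and> indep N I \<and> card I = n"
    and "\<And>I. I \<subseteq> X \<Longrightarrow> indep N I \<Longrightarrow> card I \<le> n"
  shows "rk N X = n"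
proof -
  let ?S = "card ` {I. I \<subseteq> X \<and> indep N I}"
  have "?S \<subseteq> {..n}" using assms(2) by auto
  then have fS: "finite ?S" using finite_subset by blast
  have nS: "n \<in> ?S" using assms(1) by auto
  show ?thesis unfolding rk_def
  proof (rule Max_eqI)
    show "finite ?S" by (fact fS)
    show "n \<in> ?S" by (fact nS)
    fix y assume "y \<in> ?S" then show "y \<le> n" using assms(2) by auto
  qed
qed

context
  fixes M :: "'a matroid"
  assumes M: "is_matroid M"
begin

lemma M_fin: "finite (fst M)" using M unfolding is_matroid_def Let_def by auto
lemma M_ne: "snd M \<noteq> {}" using M unfolding is_matroid_def Let_def by auto
lemma M_sub: "B \<in> snd M \<Longrightarrow> B \<subseteq> fst M" using M unfolding is_matroid_def Let_def by auto
lemma M_exch: "B1 \<in> snd M \<Longrightarrow> B2 \<in> snd M \<Longrightarrow> x \<in> B1 - B2 \<Longrightarrow>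
   \<exists>y\<in>B2 - B1. insert y (B1 - {x}) \<in> snd M"
  using M unfolding is_matroid_def Let_def by blast

lemma indep_sub: "indep M I \<Longrightarrow> I \<subseteq> fst M"
  unfolding indep_def using M_sub by blast
lemma indep_fin: "indep M I \<Longrightarrow> finite I"
  using indep_sub M_fin finite_subset by blast
lemma indep_empty: "indep M {}"
  unfolding indep_def using M_ne by blast
lemma base_fin: "B \<in> snd M \<Longrightarrow> finite B"
  using M_sub M_fin finite_subset by blast

lemma base_card_aux:
  assumes B2: "B2 \<in> snd M"
  shows "\<forall>B1. B1 \<in> snd M \<longrightarrow> card (B1 - B2) = n \<longrightarrow> card B1 = card B2"
proof (induction n)
  case 0
  show ?case
  proof (intro allI impI)
    fix B1 assume B1: "B1 \<in> snd M" and c: "card (B1 - B2) = 0"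
    have "B1 - B2 = {}" using c base_fin[OF B1] by auto
    moreover have "B2 - B1 = {}"
    proof (rule ccontr)
      assume "B2 - B1 \<noteq> {}"
      then obtain x where "x \<in> B2 - B1" by blast
      from M_exch[OF B2 B1 this] \<open>B1 - B2 = {}\<close> show False by blast
    qed
    ultimately show "card B1 = card B2" by (metis Diff_eq_empty_iff subset_antisym)
  qed
next
  case (Suc n)
  show ?case
  proof (intro allI impI)
    fix B1 assume B1: "B1 \<in> snd M" and c: "card (B1 - B2) = Suc n"
    then obtain x where x: "x \<in> B1 - B2" by (metis card_0_eq finite_Diff base_fin ex_in_conv nat.distinct(1))
    from M_exch[OF B1 B2 x] obtain y where y: "y \<in> B2 - B1" and B1': "insert y (B1 - {x}) \<in> snd M" by blast
    have "insert y (B1 - {x}) - B2 = (B1 - B2) - {x}" using y by auto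
    then have "card (insert y (B1 - {x}) - B2) = n" using c x base_fin[OF B1] by simp
    with Suc.IH B1' have "card (insert y (B1 - {x})) = card B2" by blast
    moreover have "card (insert y (B1 - {x})) = card B1"
    proof -
      have "card B1 > 0" using x base_fin[OF B1] by (auto simp: card_gt_0_iff)
      then show ?thesis using y x base_fin[OF B1] by simp
    qed
    ultimately show "card B1 = card B2" by simp
  qed
qed

lemma base_card: "B1 \<in> snd M \<Longrightarrow> B2 \<in> snd M \<Longrightarrow> card B1 = card B2"
  using base_card_aux by blast

lemma augment:
  assumes I: "indep M I" and J: "indep M J" and c: "card I < card J"
  shows "\<exists>x\<in>J - I. indep M (insert x I)"
proof (rule ccontr)
  assume na: "\<not> ?thesis"
  from J obtain BJ where BJ: "BJ \<in> snd M" "J \<subseteq> BJ" unfolding indep_def by blast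
  from I obtain B0 where B0: "B0 \<in> snd M" "I \<subseteq> B0" unfolding indep_def by blast
  obtain B where B: "B \<in> snd M" "I \<subseteq> B"
    and Bmin: "\<And>B'. B' \<in> snd M \<and> I \<subseteq> B' \<Longrightarrow> card (B - (I \<union> BJ)) \<le> card (B' - (I \<union> BJ))"
    using ex_has_least_nat[of "\<lambda>B. B \<in> snd M \<and> I \<subseteq> B" B0 "\<lambda>B. card (B - (I \<union> BJ))"] B0
    by blast
  have sub: "B \<subseteq> I \<union> BJ"
  proof (rule ccontr)
    assume "\<not> B \<subseteq> I \<union> BJ"
    then obtain x where x: "x \<in> B" "x \<notin> I \<union> BJ" by blast
    from M_exch[OF B(1) BJ(1), of x] x obtain y where y: "y \<in> BJ - B"
      and B': "insert y (B - {x}) \<in> snd M" by blast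
    have "I \<subseteq> insert y (B - {x})" using B(2) x by auto
    with Bmin B' have le: "card (B - (I \<union> BJ)) \<le> card (insert y (B - {x}) - (I \<union> BJ))" by blast
    have eq: "insert y (B - {x}) - (I \<union> BJ) = (B - (I \<union> BJ)) - {x}" using y by auto
    have "card ((B - (I \<union> BJ)) - {x}) < card (B - (I \<union> BJ))"
      using x base_fin[OF B(1)] by (intro card_Diff1_less) auto
    with le eq show False by simp
  qed
  have disj: "(J - I) \<inter> B = {}"
  proof (rule ccontr)
    assume "(J - I) \<inter> B \<noteq> {}"
    then obtain x where x: "x \<in> J - I" "x \<in> B" by blast
    have "indep M (insert x I)" unfolding indep_def using B x by blast
    with na x show False by blast
  qed
  have fB: "finite B" "finite BJ" using base_fin B BJ by auto
  have fI: "finite I" "finite J" using indep_fin I J by auto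
  have cB: "card B = card BJ" using base_card B BJ by blast
  have e1: "card (B - BJ) = card (BJ - B)"
  proof -
    have "card B = card (B \<inter> BJ) + card (B - BJ)" using fB
      by (metis card_Int_Diff)
    moreover have "card BJ = card (B \<inter> BJ) + card (BJ - B)" using fB
      by (metis Int_commute card_Int_Diff)
    ultimately show ?thesis using cB by simp
  qed
  have s1: "B - BJ \<subseteq> I - J" using sub BJ(2) by auto
  have s2: "J - I \<subseteq> BJ - B" using disj BJ(2) by auto
  have c1: "card (I - J) < card (J - I)"
  proof -
    have "card I = card (I \<inter> J) + card (I - J)" using fI by (metis card_Int_Diff)
    moreover have "card J = card (I \<inter> J) + card (J - I)" using fI by (metis Int_commute card_Int_Diff)
    ultimately show ?thesis using c by simp
  qed
  have "card (B - BJ) \<le> card (I - J)" using s1 fI by (intro card_mono) auto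
  moreover have "card (J - I) \<le> card (BJ - B)" using s2 fB by (intro card_mono) auto
  ultimately show False using e1 c1 by simp
qed

lemma rk_fin: "finite (card ` {I. I \<subseteq> X \<and> indep M I})"
proof -
  have "card ` {I. I \<subseteq> X \<and> indep M I} \<subseteq> card ` Pow (fst M)" using indep_sub by auto
  then show ?thesis using M_fin finite_subset by blast
qed

lemma rk_ge: "I \<subseteq> X \<Longrightarrow> indep M I \<Longrightarrow> card I \<le> rk M X"
  unfolding rk_def by (rule Max_ge[OF rk_fin]) blast

lemma rk_obtain: "\<exists>I. I \<subseteq> X \<and> indep M I \<and> card I = rk M X"
proof -
  have "rk M X \<in> card ` {I. I \<subseteq> X \<and> indep M I}"
    unfolding rk_def using rk_fin indep_empty by (intro Max_in) auto
  then show ?thesis by auto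
qed

lemma maxin_card: "maxin M X K \<Longrightarrow> card K = rk M X"
proof -
  assume K: "maxin M X K"
  have Kx: "K \<subseteq> X" "indep M K" using K unfolding maxin_def by auto
  have Kmax: "\<And>e. e \<in> X - K \<Longrightarrow> \<not> indep M (insert e K)" using K unfolding maxin_def by auto
  have "card K \<le> rk M X" by (rule rk_ge[OF Kx])
  moreover have "\<not> card K < rk M X"
  proof
    assume lt: "card K < rk M X"
    obtain I where I: "I \<subseteq> X" "indep M I" "card I = rk M X" using rk_obtain by blast
    have "card K < card I" using lt I(3) by simp
    from augment[OF Kx(2) I(2) this] obtain x where x: "x \<in> I - K" "indep M (insert x K)" by blast
    have "x \<in> X - K" using x I(1) by blast
    with Kmax x(2) show False by blast
  qed
  ultimately show ?thesis by simp
qed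

lemma maxin_of_card: "I \<subseteq> X \<Longrightarrow> indep M I \<Longrightarrow> card I = rk M X \<Longrightarrow> maxin M X I"
proof -
  assume a: "I \<subseteq> X" and b: "indep M I" and c: "card I = rk M X"
  show "maxin M X I" unfolding maxin_def
  proof (intro conjI ballI)
    show "I \<subseteq> X" by (fact a)
    show "indep M I" by (fact b)
    fix e assume e: "e \<in> X - I"
    show "\<not> indep M (insert e I)"
    proof
      assume ie: "indep M (insert e I)"
      have "insert e I \<subseteq> X" using a e by blast
      then have "card (insert e I) \<le> rk M X" using rk_ge ie by blast
      moreover have "card (insert e I) = Suc (card I)" using e indep_fin[OF b] by simp
      ultimately show False using c by simp
    qed
  qed
qed

lemma extend: "indep M I \<Longrightarrow> I \<subseteq> X \<Longrightarrow> \<exists>K. I \<subseteq> K \<and> maxin M X K"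
proof -
  assume I: "indep M I" "I \<subseteq> X"
  let ?P = "\<lambda>K. I \<subseteq> K \<and> K \<subseteq> X \<and> indep M K"
  have bnd: "\<forall>K. ?P K \<longrightarrow> card K < Suc (card (fst M))"
  proof (intro allI impI)
    fix K assume "?P K"
    then have "K \<subseteq> fst M" using indep_sub by blast
    then have "card K \<le> card (fst M)" using M_fin by (rule card_mono[rotated])
    then show "card K < Suc (card (fst M))" by simp
  qed
  have PI: "?P I" using I by blast
  obtain K where K: "?P K" and Kmax: "\<forall>K'. ?P K' \<longrightarrow> card K' \<le> card K"
    using ex_has_greatest_nat[OF PI bnd] by blast
  have "maxin M X K" unfolding maxin_def
  proof (intro conjI ballI)
    show "K \<subseteq> X" "indep M K" using K by auto
    fix e assume e: "e \<in> X - K"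
    show "\<not> indep M (insert e K)"
    proof
      assume "indep M (insert e K)"
      then have "?P (insert e K)" using K e by auto
      then have "card (insert e K) \<le> card K" using Kmax by blast
      moreover have "finite K" using K indep_fin by blast
      ultimately show False using e by simp
    qed
  qed
  then show ?thesis using K by blast
qed

lemma rk_mono: "X \<subseteq> Y \<Longrightarrow> rk M X \<le> rk M Y"
proof -
  assume XY: "X \<subseteq> Y"
  obtain I where I: "I \<subseteq> X" "indep M I" "card I = rk M X" using rk_obtain by blast
  have "card I \<le> rk M Y" using I XY by (intro rk_ge) auto
  then show ?thesis using I by simp
qed

lemma rk_indep: "indep M I \<Longrightarrow> rk M I = card I"
proof (rule rk_eqI)
  assume "indep M I"
  then show "\<exists>J\<subseteq>I. indep M J \<and> card J = card I" by blast
  fix J assume "J \<subseteq> I" "indep M J"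
  then show "card J \<le> card I" using \<open>indep M I\<close> indep_fin card_mono by blast
qed

lemma maxin_indep: "maxin M X K \<Longrightarrow> indep M K" unfolding maxin_def by simp
lemma maxin_sub: "maxin M X K \<Longrightarrow> K \<subseteq> X" unfolding maxin_def by simp

lemma span_rk:
  assumes IC: "maxin M C IC"
  shows "rk M (Y \<union> C) = rk M (Y \<union> IC)"
proof -
  obtain K where K: "IC \<subseteq> K" "maxin M (Y \<union> IC) K"
    using extend[of IC "Y \<union> IC"] IC unfolding maxin_def by blast
  have "maxin M (Y \<union> C) K" unfolding maxin_def
  proof (intro conjI ballI)
    show "K \<subseteq> Y \<union> C" using K IC unfolding maxin_def by blast
    show "indep M K" using K unfolding maxin_def by blast
    fix e assume e: "e \<in> Y \<union> C - K"
    show "\<not> indep M (insert e K)"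
    proof
      assume ie: "indep M (insert e K)"
      show False
      proof (cases "e \<in> Y \<union> IC")
        case True then show False using K(2) e ie unfolding maxin_def by blast
      next
        case False
        then have "e \<in> C - IC" using e by blast
        moreover have "indep M (insert e IC)" using ie K(1) indep_mono by blast
        ultimately show False using IC unfolding maxin_def by blast
      qed
    qed
  qed
  then have a: "card K = rk M (Y \<union> C)" by (rule maxin_card)
  have b: "card K = rk M (Y \<union> IC)" using K(2) by (rule maxin_card)
  show ?thesis using a b by simp
qed

lemma maxin_exists: "\<exists>K. maxin M X K"
  using extend[of "{}" X] indep_empty by blast

lemma maxin_exch:
  assumes K1: "maxin M S K1" and K2: "maxin M S K2" and x: "x \<in> K1 - K2"
  shows "\<exists>y\<in>K2 - K1. maxin M S (insert y (K1 - {x}))"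
proof -
  have f1: "finite K1" using K1 indep_fin maxin_indep by blast
  have c: "card K1 = card K2" using maxin_card K1 K2 by simp
  have i: "indep M (K1 - {x})" using K1 maxin_indep indep_mono by blast
  have "card K1 > 0" using x f1 by (auto simp: card_gt_0_iff)
  then have "card (K1 - {x}) < card K2" using c f1 x by simp
  from augment[OF i maxin_indep[OF K2] this] obtain y where
    y: "y \<in> K2 - (K1 - {x})" "indep M (insert y (K1 - {x}))" by blast
  have yK: "y \<in> K2 - K1" using y x by auto
  have "card (insert y (K1 - {x})) = card K1" using yK x f1 \<open>card K1 > 0\<close> by simp
  have "y \<in> S" using yK K2 maxin_sub by blast
  then have sub: "insert y (K1 - {x}) \<subseteq> S" using K1 maxin_sub by blast
  have "card (insert y (K1 - {x})) = rk M S" using maxin_card[OF K1] \<open>card (insert y (K1 - {x})) = card K1\<close> by simp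
  then have "maxin M S (insert y (K1 - {x}))"
    using sub y(2) by (intro maxin_of_card)
  with yK show ?thesis by blast
qed

end


context
  fixes M :: "'a matroid" and N :: "'a matroid" and C D :: "'a set" and IC :: "'a set"
  assumes M: "is_matroid M"
    and CD: "C \<subseteq> fst M" "D \<subseteq> fst M" "C \<inter> D = {}"
    and NE: "fst N = fst M - (C \<union> D)"
    and NB: "snd N = {X. X \<subseteq> fst N \<and> rk M (X \<union> C) = card X + rk M C \<and>
                 rk M (X \<union> C) = rk M (fst M - D)}"
    and IC: "maxin M C IC"
begin

lemma IC_sub: "IC \<subseteq> C" using maxin_sub[OF M IC] .
lemma IC_ind: "indep M IC" using maxin_indep[OF M IC] .
lemma IC_card: "card IC = rk M C" using maxin_card[OF M IC] .
lemma IC_fin: "finite IC" using indep_fin[OF M IC_ind] .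

lemma base_char:
  assumes X: "X \<subseteq> fst N"
  shows "X \<in> snd N \<longleftrightarrow> maxin M (fst M - D) (X \<union> IC)"
proof -
  have XIC: "X \<inter> IC = {}" using X NE IC_sub by auto
  have fX: "finite X" using X NE by (intro finite_subset[OF _ M_fin[OF M]]) auto
  have cXI: "card (X \<union> IC) = card X + card IC" using XIC fX IC_fin by (simp add: card_Un_disjoint)
  have sp: "rk M (X \<union> C) = rk M (X \<union> IC)" by (rule span_rk[OF M IC])
  have subED: "X \<union> IC \<subseteq> fst M - D" using X NE IC_sub CD by auto
  show ?thesis
  proof
    assume "X \<in> snd N"
    then have r1: "rk M (X \<union> C) = card X + rk M C" and r2: "rk M (X \<union> C) = rk M (fst M - D)"
      using NB by auto
    obtain I where I: "I \<subseteq> X \<union> IC" "indep M I" "card I = rk M (X \<union> IC)"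
      using rk_obtain[OF M] by blast
    have "card I = card (X \<union> IC)" using I(3) sp r1 cXI IC_card by simp
    then have "I = X \<union> IC" using I(1) fX IC_fin by (intro card_subset_eq) auto
    then have ind: "indep M (X \<union> IC)" using I by simp
    have "card (X \<union> IC) = rk M (fst M - D)" using cXI IC_card r1 r2 by simp
    then show "maxin M (fst M - D) (X \<union> IC)"
      using ind subED by (intro maxin_of_card[OF M]) auto
  next
    assume mx: "maxin M (fst M - D) (X \<union> IC)"
    have ind: "indep M (X \<union> IC)" using maxin_indep[OF M mx] .
    have c1: "card (X \<union> IC) = rk M (fst M - D)" using maxin_card[OF M mx] .
    have c2: "rk M (X \<union> IC) = card (X \<union> IC)" using rk_indep[OF M ind] .
    show "X \<in> snd N" using NB X sp c1 c2 cXI IC_card by auto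
  qed
qed

lemma KC:
  assumes K: "K \<subseteq> fst M - D" "indep M K" and ICK: "IC \<subseteq> K"
  shows "K \<inter> C = IC"
proof
  show "IC \<subseteq> K \<inter> C" using ICK IC_sub by auto
  show "K \<inter> C \<subseteq> IC"
  proof
    fix e assume e: "e \<in> K \<inter> C"
    show "e \<in> IC"
    proof (rule ccontr)
      assume "e \<notin> IC"
      moreover have "indep M (insert e IC)" using K(2) ICK e indep_mono by blast
      ultimately show False using IC e unfolding maxin_def by blast
    qed
  qed
qed

lemma ext_base:
  assumes J: "J \<subseteq> fst N" "indep M (J \<union> IC)"
  shows "\<exists>X. J \<subseteq> X \<and> X \<in> snd N"
proof -
  have "J \<union> IC \<subseteq> fst M - D" using J NE IC_sub CD by auto
  then obtain K where K: "J \<union> IC \<subseteq> K" "maxin M (fst M - D) K"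
    using extend[OF M J(2)] by blast
  have ICK: "IC \<subseteq> K" using K(1) by blast
  have KC': "K \<inter> C = IC" by (rule KC[OF maxin_sub[OF M K(2)] maxin_indep[OF M K(2)] ICK])
  let ?X = "K - IC"
  have Xs: "?X \<subseteq> fst N" using K(2) KC' NE unfolding maxin_def by auto
  have "?X \<union> IC = K" using K by auto
  then have "?X \<in> snd N" using base_char[OF Xs] K(2) by simp
  moreover have "J \<subseteq> ?X" using K(1) J(1) NE IC_sub by auto
  ultimately show ?thesis by blast
qed

lemma minor_matroid: "is_matroid N"
  unfolding is_matroid_def Let_def
proof (intro conjI ballI)
  show "finite (fst N)" using NE M_fin[OF M] by simp
  show "snd N \<noteq> {}" using ext_base[of "{}"] IC_ind by auto
  fix B assume "B \<in> snd N" then show "B \<subseteq> fst N" using NB by auto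
next
  fix B1 B2 x assume B1: "B1 \<in> snd N" and B2: "B2 \<in> snd N" and x: "x \<in> B1 - B2"
  have s1: "B1 \<subseteq> fst N" and s2: "B2 \<subseteq> fst N" using B1 B2 NB by auto
  have K1: "maxin M (fst M - D) (B1 \<union> IC)" using base_char[OF s1] B1 by simp
  have K2: "maxin M (fst M - D) (B2 \<union> IC)" using base_char[OF s2] B2 by simp
  have xIC: "x \<notin> IC" using x s1 NE IC_sub by auto
  have "x \<in> (B1 \<union> IC) - (B2 \<union> IC)" using x xIC by auto
  from maxin_exch[OF M K1 K2 this] obtain y where y: "y \<in> (B2 \<union> IC) - (B1 \<union> IC)"
    and mx: "maxin M (fst M - D) (insert y ((B1 \<union> IC) - {x}))" by blast
  have yB: "y \<in> B2 - B1" using y by auto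
  have s3: "insert y (B1 - {x}) \<subseteq> fst N" using s1 s2 yB by auto
  have "insert y (B1 - {x}) \<union> IC = insert y ((B1 \<union> IC) - {x})" using xIC by auto
  then have "insert y (B1 - {x}) \<in> snd N" using base_char[OF s3] mx by simp
  with yB show "\<exists>y\<in>B2 - B1. insert y (B1 - {x}) \<in> snd N" by blast
qed

lemma minor_indep: "indep N J \<longleftrightarrow> J \<subseteq> fst N \<and> indep M (J \<union> IC)"
proof
  assume "indep N J"
  then obtain X where X: "X \<in> snd N" "J \<subseteq> X" unfolding indep_def by blast
  have Xs: "X \<subseteq> fst N" using X NB by auto
  have "maxin M (fst M - D) (X \<union> IC)" using base_char[OF Xs] X(1) by blast
  then have iX: "indep M (X \<union> IC)" by (rule maxin_indep[OF M])
  have "J \<union> IC \<subseteq> X \<union> IC" using X(2) by blast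
  then have "indep M (J \<union> IC)" by (rule indep_mono[OF iX])
  moreover have "J \<subseteq> fst N" using X(2) Xs by blast
  ultimately show "J \<subseteq> fst N \<and> indep M (J \<union> IC)" by blast
next
  assume a: "J \<subseteq> fst N \<and> indep M (J \<union> IC)"
  obtain X where "J \<subseteq> X" "X \<in> snd N" using ext_base[of J] a by blast
  then show "indep N J" unfolding indep_def by blast
qed

lemma minor_rk:
  assumes Y: "Y \<subseteq> fst N"
  shows "rk N Y = rk M (Y \<union> C) - rk M C"
proof (rule rk_eqI)
  have YIC: "Y \<inter> IC = {}" using Y NE IC_sub by auto
  have fY: "finite Y" using Y NE by (intro finite_subset[OF _ M_fin[OF M]]) auto
  have sp: "rk M (Y \<union> C) = rk M (Y \<union> IC)" by (rule span_rk[OF M IC])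
  obtain K where K: "IC \<subseteq> K" "maxin M (Y \<union> IC) K"
    using extend[OF M IC_ind, of "Y \<union> IC"] by blast
  let ?J = "K - IC"
  have Ks: "K \<subseteq> Y \<union> IC" using K(2) maxin_sub[OF M] by blast
  have KJ: "?J \<union> IC = K" using K by auto
  have "?J \<subseteq> Y" using Ks by auto
  moreover have "indep N ?J" unfolding minor_indep using KJ Ks Y maxin_indep[OF M K(2)] by auto
  moreover have "card ?J = rk M (Y \<union> C) - rk M C"
  proof -
    have "card K = rk M (Y \<union> IC)" using maxin_card[OF M K(2)] .
    moreover have "card ?J = card K - card IC" using K(1) IC_fin by (simp add: card_Diff_subset)
    ultimately show ?thesis using sp IC_card by simp
  qed
  ultimately show "\<exists>I\<subseteq>Y. indep N I \<and> card I = rk M (Y \<union> C) - rk M C" by blast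
next
  fix J assume J: "J \<subseteq> Y" "indep N J"
  have sp: "rk M (Y \<union> C) = rk M (Y \<union> IC)" by (rule span_rk[OF M IC])
  have i: "indep M (J \<union> IC)" using J minor_indep by blast
  have JIC: "J \<inter> IC = {}" using J Y NE IC_sub by auto
  have fJ: "finite J" using J Y NE by (intro finite_subset[OF _ M_fin[OF M]]) auto
  have "card (J \<union> IC) \<le> rk M (Y \<union> IC)" using J(1) i by (intro rk_ge[OF M]) auto
  moreover have "card (J \<union> IC) = card J + card IC" using JIC fJ IC_fin by (simp add: card_Un_disjoint)
  ultimately show "card J \<le> rk M (Y \<union> C) - rk M C" using sp IC_card by simp
qed

end

lemma minor_is_matroid:
  assumes M: "is_matroid M" and N: "minor_of N M"
  shows "is_matroid N"
proof -
  obtain C D where CD: "C \<subseteq> fst M" "D \<subseteq> fst M" "C \<inter> D = {}" and NE: "fst N = fst M - (C \<union> D)"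
    and NB: "snd N = {X. X \<subseteq> fst N \<and> rk M (X \<union> C) = card X + rk M C \<and>
                 rk M (X \<union> C) = rk M (fst M - D)}" using N unfolding minor_of_def by blast
  obtain IC where IC: "maxin M C IC" using maxin_exists[OF M] by blast
  show ?thesis using minor_matroid[OF M CD NE NB IC] .
qed

lemma minor_trans:
  assumes M: "is_matroid M" and N: "minor_of N M" and N2: "minor_of N2 N"
  shows "minor_of N2 M"
proof -
  obtain C D where CD: "C \<subseteq> fst M" "D \<subseteq> fst M" "C \<inter> D = {}" and NE: "fst N = fst M - (C \<union> D)"
    and NB: "snd N = {X. X \<subseteq> fst N \<and> rk M (X \<union> C) = card X + rk M C \<and>
                 rk M (X \<union> C) = rk M (fst M - D)}" using N unfolding minor_of_def by blast
  obtain IC where IC: "maxin M C IC" using maxin_exists[OF M] by blast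
  have rkN: "\<And>Y. Y \<subseteq> fst N \<Longrightarrow> rk N Y = rk M (Y \<union> C) - rk M C"
    using minor_rk[OF M CD NE NB IC] by blast
  obtain C2 D2 where CD2: "C2 \<subseteq> fst N" "D2 \<subseteq> fst N" "C2 \<inter> D2 = {}"
    and NE2: "fst N2 = fst N - (C2 \<union> D2)"
    and NB2: "snd N2 = {X. X \<subseteq> fst N2 \<and> rk N (X \<union> C2) = card X + rk N C2 \<and>
                 rk N (X \<union> C2) = rk N (fst N - D2)}" using N2 unfolding minor_of_def by blast
  show ?thesis unfolding minor_of_def
  proof (rule exI[of _ "C \<union> C2"], rule exI[of _ "D \<union> D2"], intro conjI)
    show "C \<union> C2 \<subseteq> fst M" "D \<union> D2 \<subseteq> fst M" using CD CD2 NE by auto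
    show "(C \<union> C2) \<inter> (D \<union> D2) = {}" using CD CD2 NE by auto
    show E2: "fst N2 = fst M - (C \<union> C2 \<union> (D \<union> D2))" using NE2 NE CD2 by auto
    show "snd N2 = {X. X \<subseteq> fst N2 \<and> rk M (X \<union> (C \<union> C2)) = card X + rk M (C \<union> C2) \<and>
             rk M (X \<union> (C \<union> C2)) = rk M (fst M - (D \<union> D2))}"
      unfolding NB2
    proof (rule Collect_cong)
      fix X
      show "(X \<subseteq> fst N2 \<and> rk N (X \<union> C2) = card X + rk N C2 \<and> rk N (X \<union> C2) = rk N (fst N - D2)) =
            (X \<subseteq> fst N2 \<and> rk M (X \<union> (C \<union> C2)) = card X + rk M (C \<union> C2) \<and>
             rk M (X \<union> (C \<union> C2)) = rk M (fst M - (D \<union> D2)))"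
      proof (cases "X \<subseteq> fst N2")
        case False then show ?thesis by simp
      next
        case True
        have s1: "X \<union> C2 \<subseteq> fst N" using True NE2 CD2 by auto
        have e1: "rk N (X \<union> C2) = rk M (X \<union> (C \<union> C2)) - rk M C"
          using rkN[OF s1] by (simp add: Un_ac)
        have e2: "rk N C2 = rk M (C \<union> C2) - rk M C"
          using rkN[OF CD2(1)] by (simp add: Un_ac)
        have "fst N - D2 \<union> C = fst M - (D \<union> D2)" using NE CD CD2 by auto
        then have e3: "rk N (fst N - D2) = rk M (fst M - (D \<union> D2)) - rk M C"
          using rkN[of "fst N - D2"] by auto
        have m1: "rk M C \<le> rk M (C \<union> C2)" by (rule rk_mono[OF M]) auto
        have m2: "rk M (C \<union> C2) \<le> rk M (X \<union> (C \<union> C2))" by (rule rk_mono[OF M]) auto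
        have "C \<subseteq> fst M - (D \<union> D2)" using NE CD CD2 by auto
        then have m3: "rk M C \<le> rk M (fst M - (D \<union> D2))" by (rule rk_mono[OF M])
        have q1: "(rk N (X \<union> C2) = card X + rk N C2) = (rk M (X \<union> (C \<union> C2)) = card X + rk M (C \<union> C2))"
          unfolding e1 e2 using m1 m2 by arith
        have q2: "(rk N (X \<union> C2) = rk N (fst N - D2)) = (rk M (X \<union> (C \<union> C2)) = rk M (fst M - (D \<union> D2)))"
          unfolding e1 e3 using m1 m2 m3 by arith
        show ?thesis using q1 q2 True by simp
      qed
    qed
  qed
qed


definition rhom :: "('a::comm_ring_1 \<Rightarrow> 'b::comm_ring_1) \<Rightarrow> bool" where
  "rhom h \<longleftrightarrow> h 1 = 1 \<and> (\<forall>x y. h (x + y) = h x + h y) \<and> (\<forall>x y. h (x * y) = h x * h y)"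

lemma rhom_1: "rhom h \<Longrightarrow> h 1 = 1" unfolding rhom_def by simp
lemma rhom_add: "rhom h \<Longrightarrow> h (x + y) = h x + h y" unfolding rhom_def by simp
lemma rhom_mult: "rhom h \<Longrightarrow> h (x * y) = h x * h y" unfolding rhom_def by simp
lemma rhom_0: "rhom h \<Longrightarrow> h 0 = 0"
proof -
  assume h: "rhom h"
  have "h 0 = h (0 + 0)" by simp
  also have "\<dots> = h 0 + h 0" using rhom_add[OF h] .
  finally show ?thesis by simp
qed
lemma rhom_uminus: "rhom h \<Longrightarrow> h (- x) = - h x"
proof -
  assume h: "rhom h"
  have "h x + h (- x) = 0" using rhom_add[OF h, of x "-x", symmetric] rhom_0[OF h] by simp
  then show ?thesis by (simp add: eq_neg_iff_add_eq_0 add.commute)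
qed
lemma rhom_diff: "rhom h \<Longrightarrow> h (x - y) = h x - h y"
  using rhom_add[of h x "-y"] rhom_uminus[of h y] by simp
lemma rhom_numeral: "rhom h \<Longrightarrow> h (numeral n) = numeral n"
proof (induction n)
  case One then show ?case using rhom_1 by simp
next
  case (Bit0 n) then show ?case using rhom_add[of h "numeral n" "numeral n"] by (simp add: numeral_Bit0)
next
  case (Bit1 n) then show ?case
    using rhom_add[of h "numeral n + numeral n" 1] rhom_add[of h "numeral n" "numeral n"] rhom_1[of h]
    by (simp add: numeral_Bit1)
qed
lemma rhom_power: "rhom h \<Longrightarrow> h (x ^ n) = h x ^ n"
  by (induction n) (simp_all add: rhom_1 rhom_mult)

lemmas rhom_simps = rhom_1 rhom_add rhom_mult rhom_0 rhom_uminus rhom_diff rhom_numeral rhom_power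

lemma map_poly_add_hom: "rhom h \<Longrightarrow> map_poly h (p + q) = map_poly h p + map_poly h q"
  by (intro poly_eqI) (simp add: coeff_map_poly rhom_0 rhom_add)

lemma map_poly_mult_hom: "rhom h \<Longrightarrow> map_poly h (p * q) = map_poly h p * map_poly h q"
proof (induction p)
  case 0 then show ?case by simp
next
  case (pCons a p)
  have h0: "h 0 = 0" using rhom_0[OF pCons.prems] .
  have "map_poly h (pCons a p * q) = map_poly h (smult a q + pCons 0 (p * q))" by simp
  also have "\<dots> = smult (h a) (map_poly h q) + pCons 0 (map_poly h p * map_poly h q)"
    using pCons h0 by (simp add: map_poly_add_hom map_poly_smult map_poly_pCons rhom_mult)
  also have "\<dots> = map_poly h (pCons a p) * map_poly h q"
    using h0 by (simp add: map_poly_pCons)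
  finally show ?case .
qed

lemma rhom_poly: "rhom h \<Longrightarrow> rhom (\<lambda>p. poly (map_poly h p) x)"
  unfolding rhom_def[of "\<lambda>p. poly (map_poly h p) x"]
  by (simp add: map_poly_add_hom map_poly_mult_hom rhom_1)

lemma rhom_eval: "rhom (\<lambda>p. poly p x)"
  unfolding rhom_def by simp

lemma rhom_of_int: "rhom of_int" unfolding rhom_def by simp
lemma rhom_of_rat: "rhom of_rat" unfolding rhom_def by (simp add: of_rat_add of_rat_mult)
lemma rhom_Fract: "rhom (\<lambda>c::'a::idom. Fract c 1)" unfolding rhom_def by (simp add: One_fract_def)
lemma rhom_const: "rhom (\<lambda>c::'a::comm_ring_1. [:c:])" unfolding rhom_def by (simp add: one_pCons)
lemma rhom_comp: "rhom g \<Longrightarrow> rhom h \<Longrightarrow> rhom (\<lambda>x. g (h x))" unfolding rhom_def by simp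

lemma Fract_nz: "rhom g \<Longrightarrow> g q \<noteq> 0 \<Longrightarrow> Fract q 1 \<noteq> 0"
  using rhom_0[of g] by (auto simp: Zero_fract_def eq_fract)

lemma Fract_eq0: "Fract q 1 = 0 \<longleftrightarrow> q = 0"
  by (simp add: Zero_fract_def eq_fract)

section \<open>partial homomorphisms\<close>

definition phom :: "'a::comm_ring_1 set \<Rightarrow> ('a \<Rightarrow> 'b::comm_ring_1) \<Rightarrow> bool" where
  "phom S f \<longleftrightarrow> 1 \<in> S \<and> f 1 = 1 \<and> (\<forall>x\<in>S. - x \<in> S) \<and>
     (\<forall>x\<in>S. \<forall>y\<in>S. x + y \<in> S \<and> x * y \<in> S \<and> f (x + y) = f x + f y \<and> f (x * y) = f x * f y)"

context
  fixes S :: "'a::comm_ring_1 set" and f :: "'a \<Rightarrow> 'b::comm_ring_1"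
  assumes ph: "phom S f"
begin
lemma ph_1: "1 \<in> S" "f 1 = 1" using ph unfolding phom_def by auto
lemma ph_add: "x \<in> S \<Longrightarrow> y \<in> S \<Longrightarrow> x + y \<in> S \<and> f (x + y) = f x + f y" using ph unfolding phom_def by auto
lemma ph_mult: "x \<in> S \<Longrightarrow> y \<in> S \<Longrightarrow> x * y \<in> S \<and> f (x * y) = f x * f y" using ph unfolding phom_def by auto
lemma ph_uminus_mem: "x \<in> S \<Longrightarrow> - x \<in> S" using ph unfolding phom_def by auto
lemma ph_0: "0 \<in> S" "f 0 = 0"
proof -
  have m: "- 1 \<in> S" using ph_uminus_mem ph_1 by blast
  then show z: "0 \<in> S" using ph_add[OF ph_1(1) m] by simp
  have "f (0 + 0) = f 0 + f 0" using ph_add[OF z z] by blast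
  then show "f 0 = 0" by simp
qed
lemma ph_uminus: "x \<in> S \<Longrightarrow> - x \<in> S \<and> f (- x) = - f x"
proof -
  assume x: "x \<in> S"
  have m: "- x \<in> S" using ph_uminus_mem x .
  have "f (x + - x) = f x + f (- x)" using ph_add[OF x m] by blast
  then have "f x + f (- x) = 0" using ph_0 by simp
  then show ?thesis using m by (simp add: eq_neg_iff_add_eq_0 add.commute)
qed
lemma ph_diff: "x \<in> S \<Longrightarrow> y \<in> S \<Longrightarrow> x - y \<in> S \<and> f (x - y) = f x - f y"
  using ph_add[of x "- y"] ph_uminus[of y] by simp

lemma ph_sum: "finite A \<Longrightarrow> (\<forall>a\<in>A. g a \<in> S) \<Longrightarrow> sum g A \<in> S \<and> f (sum g A) = (\<Sum>a\<in>A. f (g a))"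
proof (induction A rule: finite_induct)
  case empty then show ?case using ph_0 by simp
next
  case (insert a A) then show ?case using ph_add[of "g a" "sum g A"] by simp
qed

lemma ph_prod: "finite A \<Longrightarrow> (\<forall>a\<in>A. g a \<in> S) \<Longrightarrow> prod g A \<in> S \<and> f (prod g A) = (\<Prod>a\<in>A. f (g a))"
proof (induction A rule: finite_induct)
  case empty then show ?case using ph_1 by simp
next
  case (insert a A) then show ?case using ph_mult[of "g a" "prod g A"] by simp
qed

lemma ph_sign: "(of_int (sign p) :: 'a) \<in> S \<and> f (of_int (sign p)) = of_int (sign p)"
  using ph_1 ph_uminus[of 1] by (cases p rule: sign_cases) simp_all

lemma ph_det:
  assumes g: "\<And>i j. i < n \<Longrightarrow> j < n \<Longrightarrow> g i j \<in> S"
  shows "det (mat n n (\<lambda>(i, j). f (g i j))) = f (det (mat n n (\<lambda>(i, j). g i j)))"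
proof -
  let ?P = "{p. p permutes {0..<n}}"
  have fP: "finite ?P" by (simp add: finite_permutations)
  have pin: "\<And>p i. p \<in> ?P \<Longrightarrow> i < n \<Longrightarrow> p i < n"
    using permutes_in_image by fastforce
  let ?t = "\<lambda>p. of_int (sign p) * (\<Prod>i = 0..<n. g i (p i))"
  have tS: "\<And>p. p \<in> ?P \<Longrightarrow> ?t p \<in> S \<and> f (?t p) = of_int (sign p) * (\<Prod>i = 0..<n. f (g i (p i)))"
  proof -
    fix p assume p: "p \<in> ?P"
    have pr: "(\<Prod>i = 0..<n. g i (p i)) \<in> S \<and> f (\<Prod>i = 0..<n. g i (p i)) = (\<Prod>i = 0..<n. f (g i (p i)))"
      using pin[OF p] g by (intro ph_prod) auto
    then show "?t p \<in> S \<and> f (?t p) = of_int (sign p) * (\<Prod>i = 0..<n. f (g i (p i)))"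
      using ph_mult[of "of_int (sign p)" "\<Prod>i = 0..<n. g i (p i)"] ph_sign[of p] by simp
  qed
  have "det (mat n n (\<lambda>(i, j). g i j)) =
     (\<Sum>p\<in>?P. of_int (sign p) * (\<Prod>i = 0..<n. mat n n (\<lambda>(i, j). g i j) $$ (i, p i)))"
    by (rule det_def') simp
  also have "\<dots> = (\<Sum>p\<in>?P. ?t p)"
  proof (rule sum.cong[OF refl])
    fix p assume p: "p \<in> ?P"
    have "(\<Prod>i = 0..<n. mat n n (\<lambda>(i, j). g i j) $$ (i, p i)) = (\<Prod>i = 0..<n. g i (p i))"
      by (rule prod.cong[OF refl]) (simp add: pin[OF p])
    then show "of_int (sign p) * (\<Prod>i = 0..<n. mat n n (\<lambda>(i, j). g i j) $$ (i, p i)) = ?t p" by simp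
  qed
  finally have d1: "det (mat n n (\<lambda>(i, j). g i j)) = (\<Sum>p\<in>?P. ?t p)" .
  have "det (mat n n (\<lambda>(i, j). f (g i j))) =
     (\<Sum>p\<in>?P. of_int (sign p) * (\<Prod>i = 0..<n. mat n n (\<lambda>(i, j). f (g i j)) $$ (i, p i)))"
    by (rule det_def') simp
  also have "\<dots> = (\<Sum>p\<in>?P. of_int (sign p) * (\<Prod>i = 0..<n. f (g i (p i))))"
  proof (rule sum.cong[OF refl])
    fix p assume p: "p \<in> ?P"
    have "(\<Prod>i = 0..<n. mat n n (\<lambda>(i, j). f (g i j)) $$ (i, p i)) = (\<Prod>i = 0..<n. f (g i (p i)))"
      by (rule prod.cong[OF refl]) (simp add: pin[OF p])
    then show "of_int (sign p) * (\<Prod>i = 0..<n. mat n n (\<lambda>(i, j). f (g i j)) $$ (i, p i)) =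
       of_int (sign p) * (\<Prod>i = 0..<n. f (g i (p i)))" by simp
  qed
  finally have d2: "det (mat n n (\<lambda>(i, j). f (g i j))) = (\<Sum>p\<in>?P. of_int (sign p) * (\<Prod>i = 0..<n. f (g i (p i))))" .
  have "f (\<Sum>p\<in>?P. ?t p) = (\<Sum>p\<in>?P. f (?t p))" using ph_sum[OF fP, of ?t] tS by blast
  also have "\<dots> = (\<Sum>p\<in>?P. of_int (sign p) * (\<Prod>i = 0..<n. f (g i (p i))))"
    using tS by (intro sum.cong[OF refl]) blast
  finally show ?thesis using d1 d2 by simp
qed

end

lemma rep_transfer:
  assumes ph: "phom S f" and GS: "\<And>g. g \<in> G \<Longrightarrow> g \<in> S \<and> f g \<in> G'" and z: "0 \<notin> G'"
    and rep: "pf_representable G M"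
  shows "pf_representable G' M"
proof -
  obtain m n and A :: "nat \<Rightarrow> nat \<Rightarrow> 'a" where ent: "\<forall>i<m. \<forall>j<n. A i j \<in> G \<union> {0}"
    and sd: "\<forall>Rs Cs. Rs \<subseteq> {..<m} \<and> Cs \<subseteq> {..<n} \<and> card Rs = card Cs \<and> subdet A Rs Cs \<noteq> 0
         \<longrightarrow> subdet A Rs Cs \<in> G"
    and iso: "matroid_iso M (matM m n A)"
    using rep unfolding pf_representable_def by blast
  define A' where "A' = (\<lambda>i j. f (A i j))"
  have AS: "A i j \<in> S" if "i < m" "j < n" for i j
  proof -
    have "A i j \<in> G \<union> {0}" using ent that by blast
    then show ?thesis using GS[of "A i j"] ph_0[OF ph] by auto
  qed
  have sdf: "subdet A' Rs Cs = f (subdet A Rs Cs)"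
    if R: "Rs \<subseteq> {..<m}" and C: "Cs \<subseteq> {..<n}" and c: "card Rs = card Cs" for Rs Cs
  proof -
    have fR: "finite Rs" and fC: "finite Cs" using R C finite_subset by auto
    have "\<And>i j. i < card Rs \<Longrightarrow> j < card Rs \<Longrightarrow>
       A (sorted_list_of_set Rs ! i) (sorted_list_of_set Cs ! j) \<in> S"
    proof -
      fix i j assume i: "i < card Rs" and j: "j < card Rs"
      have "sorted_list_of_set Rs ! i \<in> set (sorted_list_of_set Rs)" using i fR
        by (intro nth_mem) simp
      then have a: "sorted_list_of_set Rs ! i \<in> Rs" using fR by simp
      have "sorted_list_of_set Cs ! j \<in> set (sorted_list_of_set Cs)" using j fC c
        by (intro nth_mem) simp
      then have b: "sorted_list_of_set Cs ! j \<in> Cs" using fC by simp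
      have "sorted_list_of_set Rs ! i < m" using a R by auto
      moreover have "sorted_list_of_set Cs ! j < n" using b C by auto
      ultimately show "A (sorted_list_of_set Rs ! i) (sorted_list_of_set Cs ! j) \<in> S"
        by (rule AS)
    qed
    from ph_det[OF ph, of "card Rs" "\<lambda>i j. A (sorted_list_of_set Rs ! i) (sorted_list_of_set Cs ! j)", OF this]
    show ?thesis unfolding subdet_def A'_def by simp
  qed
  have nz: "(subdet A' Rs Cs = 0) = (subdet A Rs Cs = 0)"
    if R: "Rs \<subseteq> {..<m}" and C: "Cs \<subseteq> {..<n}" and c: "card Rs = card Cs" for Rs Cs
  proof (cases "subdet A Rs Cs = 0")
    case True then show ?thesis using sdf[OF R C c] ph_0[OF ph] by simp
  next
    case False
    then have "subdet A Rs Cs \<in> G" using sd R C c by blast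
    then have "f (subdet A Rs Cs) \<in> G'" using GS[of "subdet A Rs Cs"] by blast
    then show ?thesis using sdf[OF R C c] z False by auto
  qed
  have key: "(Rs \<subseteq> {..<m} \<and> Cs \<subseteq> {..<n} \<and> card Rs = card Cs \<and> subdet A' Rs Cs \<noteq> 0) =
      (Rs \<subseteq> {..<m} \<and> Cs \<subseteq> {..<n} \<and> card Rs = card Cs \<and> subdet A Rs Cs \<noteq> 0)" for Rs Cs
    using nz[of Rs Cs] by blast
  have eqM: "matM m n A' = matM m n A"
    unfolding matM_def by (simp only: key)
  have c1: "\<forall>i<m. \<forall>j<n. A' i j \<in> G' \<union> {0}"
  proof (intro allI impI)
    fix i j assume "i < m" "j < n"
    then have "A i j \<in> G \<union> {0}" using ent by blast
    then show "A' i j \<in> G' \<union> {0}" using GS[of "A i j"] ph_0[OF ph] unfolding A'_def by auto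
  qed
  have c2: "\<forall>Rs Cs. Rs \<subseteq> {..<m} \<and> Cs \<subseteq> {..<n} \<and> card Rs = card Cs \<and> subdet A' Rs Cs \<noteq> 0
         \<longrightarrow> subdet A' Rs Cs \<in> G'"
  proof (intro allI impI)
    fix Rs Cs assume a: "Rs \<subseteq> {..<m} \<and> Cs \<subseteq> {..<n} \<and> card Rs = card Cs \<and> subdet A' Rs Cs \<noteq> 0"
    then have "subdet A Rs Cs \<noteq> 0" using nz by blast
    then have "subdet A Rs Cs \<in> G" using sd a by blast
    then show "subdet A' Rs Cs \<in> G'" using GS[of "subdet A Rs Cs"] sdf a by auto
  qed
  have c3: "matroid_iso M (matM m n A')" using iso eqM by simp
  show ?thesis unfolding pf_representable_def using c1 c2 c3 by blast
qed


definition locD :: "('r::comm_ring_1 \<Rightarrow> 'k::field) \<Rightarrow> ('r \<Rightarrow> 'l::comm_ring_1) \<Rightarrow> 'k set" where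
  "locD emb ev = {x. \<exists>p q u. x = emb p / emb q \<and> ev q * u = 1}"
definition locf :: "('r::comm_ring_1 \<Rightarrow> 'k::field) \<Rightarrow> ('r \<Rightarrow> 'l::comm_ring_1) \<Rightarrow> 'k \<Rightarrow> 'l" where
  "locf emb ev x = (SOME v. \<exists>p q u. x = emb p / emb q \<and> ev q * u = 1 \<and> v = ev p * u)"

context
  fixes emb :: "'r::comm_ring_1 \<Rightarrow> 'k::field" and ev :: "'r \<Rightarrow> 'l::comm_ring_1"
  assumes he: "rhom emb" and hv: "rhom ev" and ker: "\<And>p. emb p = 0 \<Longrightarrow> ev p = 0"
begin

lemma unit_nz: "ev q * u = 1 \<Longrightarrow> emb q \<noteq> 0"
proof
  assume a: "ev q * u = 1" and b: "emb q = 0"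
  then have "ev q = 0" using ker by blast
  with a show False by simp
qed

lemma loc_wd:
  assumes e: "emb p / emb q = emb p' / emb q'" and u: "ev q * u = 1" and u': "ev q' * u' = 1"
  shows "ev p * u = ev p' * u'"
proof -
  have nq: "emb q \<noteq> 0" and nq': "emb q' \<noteq> 0" using unit_nz u u' by auto
  have "emb p * emb q' = emb p' * emb q" using e nq nq' by (simp add: frac_eq_eq)
  then have "emb (p * q' - p' * q) = 0" using he by (simp add: rhom_diff rhom_mult)
  then have "ev (p * q' - p' * q) = 0" by (rule ker)
  then have k: "ev p * ev q' = ev p' * ev q" using hv by (simp add: rhom_diff rhom_mult)
  have "ev p * u = ev p * u * (ev q' * u')" using u' by simp
  also have "\<dots> = (ev p * ev q') * (u * u')" by (simp add: ac_simps)
  also have "\<dots> = (ev p' * ev q) * (u * u')" using k by simp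
  also have "\<dots> = ev p' * u' * (ev q * u)" by (simp add: ac_simps)
  finally show ?thesis using u by simp
qed

lemma locf_eq:
  assumes u: "ev q * u = 1"
  shows "locf emb ev (emb p / emb q) = ev p * u"
  unfolding locf_def
proof (rule some_equality)
  show "\<exists>p' q' u'. emb p / emb q = emb p' / emb q' \<and> ev q' * u' = 1 \<and> ev p * u = ev p' * u'"
    using u by blast
  fix v assume "\<exists>p' q' u'. emb p / emb q = emb p' / emb q' \<and> ev q' * u' = 1 \<and> v = ev p' * u'"
  then obtain p' q' u' where a: "emb p / emb q = emb p' / emb q'" "ev q' * u' = 1" "v = ev p' * u'"
    by blast
  show "v = ev p * u" using loc_wd[OF a(1) u a(2)] a(3) by simp
qed

lemma locD_I: "ev q * u = 1 \<Longrightarrow> emb p / emb q \<in> locD emb ev"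
  unfolding locD_def by blast

lemma locD_E:
  assumes "x \<in> locD emb ev"
  obtains p q u where "x = emb p / emb q" "ev q * u = 1"
  using assms unfolding locD_def by blast

lemma loc_emb: "emb p \<in> locD emb ev \<and> locf emb ev (emb p) = ev p"
proof -
  have u: "ev 1 * 1 = 1" using rhom_1[OF hv] by simp
  have "emb p = emb p / emb 1" using rhom_1[OF he] by simp
  then show ?thesis using locD_I[OF u, of p] locf_eq[OF u, of p] by simp
qed

lemma loc_add:
  assumes x: "x \<in> locD emb ev" and y: "y \<in> locD emb ev"
  shows "x + y \<in> locD emb ev \<and> locf emb ev (x + y) = locf emb ev x + locf emb ev y"
proof -
  obtain p q u where xr: "x = emb p / emb q" "ev q * u = 1" using x by (rule locD_E)
  obtain p' q' u' where yr: "y = emb p' / emb q'" "ev q' * u' = 1" using y by (rule locD_E)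
  have nq: "emb q \<noteq> 0" and nq': "emb q' \<noteq> 0" using unit_nz xr yr by auto
  have s: "x + y = emb (p * q' + p' * q) / emb (q * q')"
    using xr(1) yr(1) nq nq' he by (simp add: add_frac_eq rhom_add rhom_mult)
  have uu: "ev (q * q') * (u * u') = 1"
  proof -
    have "ev (q * q') * (u * u') = (ev q * u) * (ev q' * u')" using hv by (simp add: rhom_mult ac_simps)
    then show ?thesis using xr(2) yr(2) by simp
  qed
  have "locf emb ev (x + y) = ev (p * q' + p' * q) * (u * u')" unfolding s by (rule locf_eq[OF uu])
  also have "\<dots> = ev p * u * (ev q' * u') + ev p' * u' * (ev q * u)"
    using hv by (simp add: rhom_add rhom_mult algebra_simps)
  also have "\<dots> = locf emb ev x + locf emb ev y"
    using xr yr locf_eq by simp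
  finally show ?thesis using s locD_I[OF uu] by simp
qed

lemma loc_mult:
  assumes x: "x \<in> locD emb ev" and y: "y \<in> locD emb ev"
  shows "x * y \<in> locD emb ev \<and> locf emb ev (x * y) = locf emb ev x * locf emb ev y"
proof -
  obtain p q u where xr: "x = emb p / emb q" "ev q * u = 1" using x by (rule locD_E)
  obtain p' q' u' where yr: "y = emb p' / emb q'" "ev q' * u' = 1" using y by (rule locD_E)
  have s: "x * y = emb (p * p') / emb (q * q')"
    using xr(1) yr(1) he by (simp add: rhom_mult)
  have uu: "ev (q * q') * (u * u') = 1"
  proof -
    have "ev (q * q') * (u * u') = (ev q * u) * (ev q' * u')" using hv by (simp add: rhom_mult ac_simps)
    then show ?thesis using xr(2) yr(2) by simp
  qed
  have "locf emb ev (x * y) = ev (p * p') * (u * u')" unfolding s by (rule locf_eq[OF uu])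
  also have "\<dots> = (ev p * u) * (ev p' * u')"
    using hv by (simp add: rhom_mult ac_simps)
  also have "\<dots> = locf emb ev x * locf emb ev y"
    using xr yr locf_eq by simp
  finally show ?thesis using s locD_I[OF uu] by simp
qed

lemma loc_uminus:
  assumes x: "x \<in> locD emb ev"
  shows "- x \<in> locD emb ev"
proof -
  obtain p q u where xr: "x = emb p / emb q" "ev q * u = 1" using x by (rule locD_E)
  have "- x = emb (- p) / emb q" using xr he by (simp add: rhom_uminus)
  then show ?thesis using locD_I[OF xr(2)] by simp
qed

lemma loc_phom: "phom (locD emb ev) (locf emb ev)"
proof -
  have "1 \<in> locD emb ev \<and> locf emb ev 1 = 1"
    using loc_emb[of 1] rhom_1[OF he] rhom_1[OF hv] by simp
  then show ?thesis unfolding phom_def using loc_add loc_mult loc_uminus by blast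
qed

lemma loc_inv:
  assumes x: "x \<in> locD emb ev" and w: "locf emb ev x * w = 1"
  shows "inverse x \<in> locD emb ev \<and> locf emb ev (inverse x) * locf emb ev x = 1"
proof -
  obtain p q u where xr: "x = emb p / emb q" "ev q * u = 1" using x by (rule locD_E)
  have fx: "locf emb ev x = ev p * u" using xr locf_eq by simp
  have uw: "ev p * (u * w) = 1" using w fx by (simp add: ac_simps)
  have ix: "inverse x = emb q / emb p" using xr by simp
  have "locf emb ev (inverse x) = ev q * (u * w)" unfolding ix by (rule locf_eq[OF uw])
  then have "locf emb ev (inverse x) * locf emb ev x = (ev q * u) * (ev p * (u * w))"
    using fx by (simp add: ac_simps)
  then show ?thesis using xr(2) uw ix locD_I[OF uw] by simp
qed

end

lemma gen_transfer:
  assumes ph: "phom S f"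
   and Finv: "\<And>a w. a \<in> S \<Longrightarrow> f a * w = 1 \<Longrightarrow> inverse a \<in> S \<and> f (inverse a) * f a = 1"
   and gens: "\<And>s. s \<in> T \<Longrightarrow> s \<in> S \<and> f s \<in> G'"
   and G1: "1 \<in> G'" and Gm: "\<And>a b. a \<in> G' \<Longrightarrow> b \<in> G' \<Longrightarrow> a * b \<in> G'"
   and Gu: "\<And>a. a \<in> G' \<Longrightarrow> \<exists>w. a * w = 1"
   and Gi: "\<And>a b. a \<in> G' \<Longrightarrow> b * a = 1 \<Longrightarrow> b \<in> G'"
   and x: "x \<in> gen_grp T"
  shows "x \<in> S \<and> f x \<in> G'"
  using x
proof (induction rule: gen_grp.induct)
  case one then show ?case using ph_1[OF ph] G1 by simp
next
  case (gen s) then show ?case using gens by blast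
next
  case (mult a b) then show ?case using ph_mult[OF ph, of a b] Gm by auto
next
  case (inv a)
  then obtain w where "f a * w = 1" using Gu by blast
  then have "inverse a \<in> S \<and> f (inverse a) * f a = 1" using Finv inv.IH by blast
  then show ?case using Gi inv.IH by blast
qed

lemma gen_grp_nz: "0 \<notin> T \<Longrightarrow> x \<in> gen_grp T \<Longrightarrow> (x::'a::field) \<noteq> 0"
proof -
  assume T: "0 \<notin> T"
  show "x \<in> gen_grp T \<Longrightarrow> x \<noteq> 0"
    by (induction rule: gen_grp.induct) (use T in auto)
qed

lemma rep_via_loc:
  fixes emb :: "'r::comm_ring_1 \<Rightarrow> 'k::field" and ev :: "'r \<Rightarrow> 'l::comm_ring_1"
  assumes he: "rhom emb" and hv: "rhom ev" and ker: "\<And>p. emb p = 0 \<Longrightarrow> ev p = 0"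
   and gens: "\<And>s. s \<in> T \<Longrightarrow> s \<in> locD emb ev \<and> locf emb ev s \<in> G'"
   and one: "1 \<in> G'" and mult: "\<And>a b. a \<in> G' \<Longrightarrow> b \<in> G' \<Longrightarrow> a * b \<in> G'"
   and unit: "\<And>a. a \<in> G' \<Longrightarrow> \<exists>w. a * w = 1"
   and invc: "\<And>a b. a \<in> G' \<Longrightarrow> b * a = 1 \<Longrightarrow> b \<in> G'"
   and rep: "pf_representable (gen_grp T) M"
  shows "pf_representable G' M"
proof (rule rep_transfer[OF loc_phom[OF he hv ker] _ _ rep])
  fix g assume g: "g \<in> gen_grp T"
  have A: "phom (locD emb ev) (locf emb ev)" by (rule loc_phom[OF he hv ker])
  have B: "\<And>a w. a \<in> locD emb ev \<Longrightarrow> locf emb ev a * w = 1 \<Longrightarrow>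
     inverse a \<in> locD emb ev \<and> locf emb ev (inverse a) * locf emb ev a = 1"
    by (rule loc_inv[OF he hv ker])
  show "g \<in> locD emb ev \<and> locf emb ev g \<in> G'"
    by (rule gen_transfer[OF A B gens one mult unit invc g])
next
  show "0 \<notin> G'"
  proof
    assume "0 \<in> G'"
    then obtain w where "0 * w = (1::'l)" using unit by blast
    then show False by simp
  qed
qed

lemma gen_grp_field_props:
  fixes T :: "'a::field set" assumes T: "0 \<notin> T"
  shows "1 \<in> gen_grp T" "\<And>a b. a \<in> gen_grp T \<Longrightarrow> b \<in> gen_grp T \<Longrightarrow> a * b \<in> gen_grp T"
    "\<And>a. a \<in> gen_grp T \<Longrightarrow> \<exists>w. a * w = 1" "\<And>a b. a \<in> gen_grp T \<Longrightarrow> b * a = 1 \<Longrightarrow> b \<in> gen_grp T"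
proof -
  show "1 \<in> gen_grp T" by (rule gen_grp.one)
  show "\<And>a b. a \<in> gen_grp T \<Longrightarrow> b \<in> gen_grp T \<Longrightarrow> a * b \<in> gen_grp T" by (rule gen_grp.mult)
  fix a assume a: "a \<in> gen_grp T"
  then have nz: "a \<noteq> 0" using gen_grp_nz T by blast
  then show "\<exists>w. a * w = 1" by (intro exI[of _ "inverse a"]) simp
  fix b assume "b * a = 1"
  then have "b = inverse a" using nz by (metis inverse_unique mult.commute)
  then show "b \<in> gen_grp T" using a by (simp add: gen_grp.inv)
qed

definition grp_ok :: "'l::comm_ring_1 set \<Rightarrow> bool" where
  "grp_ok G' \<longleftrightarrow> 1 \<in> G' \<and> (\<forall>a\<in>G'. \<forall>b\<in>G'. a * b \<in> G') \<and> (\<forall>a\<in>G'. \<exists>w. a * w = 1) \<and>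
     (\<forall>a\<in>G'. \<forall>b. b * a = 1 \<longrightarrow> b \<in> G')"

lemma rep_via_loc':
  fixes emb :: "'r::comm_ring_1 \<Rightarrow> 'k::field" and ev :: "'r \<Rightarrow> 'l::comm_ring_1"
  assumes he: "rhom emb" and hv: "rhom ev" and ker: "\<forall>p. emb p = 0 \<longrightarrow> ev p = 0"
   and gens: "\<forall>s\<in>T. s \<in> locD emb ev \<and> locf emb ev s \<in> G'"
   and ok: "grp_ok G'"
   and rep: "pf_representable (gen_grp T) M"
  shows "pf_representable G' M"
proof (rule rep_via_loc[of emb ev T G' M])
  show "rhom emb" by (fact he)
  show "rhom ev" by (fact hv)
  show "pf_representable (gen_grp T) M" by (fact rep)
  fix p show "emb p = 0 \<Longrightarrow> ev p = 0" using ker by blast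
next
  fix s show "s \<in> T \<Longrightarrow> s \<in> locD emb ev \<and> locf emb ev s \<in> G'" using gens by blast
next
  show "1 \<in> G'" using ok unfolding grp_ok_def by blast
next
  fix a b show "a \<in> G' \<Longrightarrow> b \<in> G' \<Longrightarrow> a * b \<in> G'" using ok unfolding grp_ok_def by blast
next
  fix a show "a \<in> G' \<Longrightarrow> \<exists>w. a * w = 1" using ok unfolding grp_ok_def by blast
next
  fix a b show "a \<in> G' \<Longrightarrow> b * a = 1 \<Longrightarrow> b \<in> G'" using ok unfolding grp_ok_def by blast
qed

lemma grp_ok_field: "0 \<notin> T \<Longrightarrow> grp_ok (gen_grp (T::'a::field set))"
proof -
  assume T: "0 \<notin> T"
  note P = gen_grp_field_props[OF T]
  show ?thesis unfolding grp_ok_def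
  proof (intro conjI ballI allI impI)
    show "1 \<in> gen_grp T" by (rule P(1))
    fix a assume a: "a \<in> gen_grp T"
    show "\<exists>w. a * w = 1" by (rule P(3)[OF a])
    fix b
    show "b \<in> gen_grp T \<Longrightarrow> a * b \<in> gen_grp T" by (rule P(2)[OF a])
    show "b * a = 1 \<Longrightarrow> b \<in> gen_grp T" by (rule P(4)[OF a])
  qed
qed

lemma ph_one': "phom S f \<Longrightarrow> 1 \<in> S \<and> f 1 = 1" using ph_1 by blast
lemma ph_add': "phom S f \<Longrightarrow> x \<in> S \<and> f x = a \<Longrightarrow> y \<in> S \<and> f y = b \<Longrightarrow> x + y \<in> S \<and> f (x + y) = a + b"
  using ph_add by blast
lemma ph_mult': "phom S f \<Longrightarrow> x \<in> S \<and> f x = a \<Longrightarrow> y \<in> S \<and> f y = b \<Longrightarrow> x * y \<in> S \<and> f (x * y) = a * b"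
  using ph_mult by blast
lemma ph_diff': "phom S f \<Longrightarrow> x \<in> S \<and> f x = a \<Longrightarrow> y \<in> S \<and> f y = b \<Longrightarrow> x - y \<in> S \<and> f (x - y) = a - b"
  using ph_diff by blast
lemma ph_uminus': "phom S f \<Longrightarrow> x \<in> S \<and> f x = a \<Longrightarrow> - x \<in> S \<and> f (- x) = - a"
  using ph_uminus by blast


lemma five_cases: "(x::5) = 0 \<or> x = 1 \<or> x = 2 \<or> x = 3 \<or> x = 4"
proof (cases x)
  case (of_int z)
  then have "z = 0 \<or> z = 1 \<or> z = 2 \<or> z = 3 \<or> z = 4" by auto
  then show ?thesis using of_int by auto
qed

lemma H1_props0: "1 \<in> H1" "\<And>a b. a \<in> H1 \<Longrightarrow> b \<in> H1 \<Longrightarrow> a * b \<in> H1"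
  "\<And>a. a \<in> H1 \<Longrightarrow> \<exists>w. a * w = 1" "\<And>a b. a \<in> H1 \<Longrightarrow> b * a = 1 \<Longrightarrow> b \<in> H1"
proof -
  show "1 \<in> H1" unfolding H1_def by simp
  show "\<And>a b. a \<in> H1 \<Longrightarrow> b \<in> H1 \<Longrightarrow> a * b \<in> H1"
  proof -
    fix a b :: 5 assume "a \<in> H1" "b \<in> H1"
    then have "a \<noteq> 0" "b \<noteq> 0" unfolding H1_def by auto
    then show "a * b \<in> H1" unfolding H1_def using five_cases[of a] five_cases[of b] by auto
  qed
  show "\<And>a. a \<in> H1 \<Longrightarrow> \<exists>w. a * w = 1"
  proof -
    fix a :: 5 assume "a \<in> H1"
    then have "a = 1 \<or> a = 2 \<or> a = 3 \<or> a = 4" using five_cases[of a] unfolding H1_def by auto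
    then show "\<exists>w. a * w = 1"
    proof (elim disjE)
      assume "a = 1" then show ?thesis by (intro exI[of _ 1]) simp
    next
      assume "a = 2" then show ?thesis by (intro exI[of _ 3]) simp
    next
      assume "a = 3" then show ?thesis by (intro exI[of _ 2]) simp
    next
      assume "a = 4" then show ?thesis by (intro exI[of _ 4]) simp
    qed
  qed
  show "\<And>a b. a \<in> H1 \<Longrightarrow> b * a = 1 \<Longrightarrow> b \<in> H1" unfolding H1_def by auto
qed

lemma H1_ok: "grp_ok H1" unfolding grp_ok_def using H1_props0 by blast

section \<open>H2 to H1\<close>

definition emb2 :: "int poly \<Rightarrow> complex" where "emb2 = (\<lambda>p. poly (map_poly of_int p) \<i>)"
definition ev2 :: "int poly \<Rightarrow> 5" where "ev2 = (\<lambda>p. poly (map_poly of_int p) 2)"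

lemma rhom_emb2: "rhom emb2" unfolding emb2_def by (rule rhom_poly[OF rhom_of_int])
lemma rhom_ev2: "rhom ev2" unfolding ev2_def by (rule rhom_poly[OF rhom_of_int])

lemma dec2: "\<exists>a b::int. emb2 p = of_int a + \<i> * of_int b \<and> ev2 p = of_int a + 2 * of_int b"
proof (induction p)
  case 0 show ?case by (intro exI[of _ 0]) (simp add: emb2_def ev2_def)
next
  case (pCons c p)
  then obtain a b :: int where ab: "emb2 p = of_int a + \<i> * of_int b" "ev2 p = of_int a + 2 * of_int b"
    by blast
  have e1: "emb2 (pCons c p) = of_int c + \<i> * emb2 p" unfolding emb2_def by (simp add: map_poly_pCons)
  have e2: "ev2 (pCons c p) = of_int c + 2 * ev2 p" unfolding ev2_def by (simp add: map_poly_pCons)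
  have "emb2 (pCons c p) = of_int (c - b) + \<i> * of_int a"
    unfolding e1 ab by (simp add: algebra_simps)
  moreover have "ev2 (pCons c p) = of_int (c - b) + 2 * of_int a"
  proof -
    have h: "(2::5) * 2 = -1" by simp
    have "ev2 (pCons c p) = of_int c + 2 * of_int a + (2 * 2) * (of_int b :: 5)"
      unfolding e2 ab by (simp add: algebra_simps)
    also have "\<dots> = of_int (c - b) + 2 * of_int a" unfolding h by simp
    finally show ?thesis .
  qed
  ultimately show ?case by blast
qed

lemma ker2: "emb2 p = 0 \<Longrightarrow> ev2 p = 0"
proof -
  assume z: "emb2 p = 0"
  obtain a b :: int where ab: "emb2 p = of_int a + \<i> * of_int b" "ev2 p = of_int a + 2 * of_int b"
    using dec2 by blast
  have "a = 0 \<and> b = 0" using z ab(1) by (simp add: complex_eq_iff)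
  then show "ev2 p = 0" using ab(2) by simp
qed

lemma rep21: "pf_representable H2 M \<Longrightarrow> pf_representable H1 M"
proof -
  let ?S = "locD emb2 ev2" and ?f = "locf emb2 ev2"
  have ph: "phom ?S ?f" by (rule loc_phom[OF rhom_emb2 rhom_ev2 ker2])
  have "emb2 [:0, 1:] = \<i>" "ev2 [:0, 1:] = 2" unfolding emb2_def ev2_def by (simp_all add: map_poly_pCons)
  then have e1: "\<i> \<in> ?S \<and> ?f \<i> = 2" using loc_emb[OF rhom_emb2 rhom_ev2 ker2, of "[:0, 1:]"] by simp
  have e2: "1 - \<i> \<in> ?S \<and> ?f (1 - \<i>) = 1 - 2" by (rule ph_diff'[OF ph ph_one'[OF ph] e1])
  have gens: "\<forall>s\<in>{\<i>, 1 - \<i>}. s \<in> ?S \<and> ?f s \<in> H1"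
    using e1 e2 unfolding H1_def by auto
  have ker: "\<forall>p. emb2 p = 0 \<longrightarrow> ev2 p = 0" using ker2 by blast
  assume "pf_representable H2 M"
  then show ?thesis unfolding H2_def
    by (rule rep_via_loc'[OF rhom_emb2 rhom_ev2 ker gens H1_ok])
qed

lemma ker_Fract: "rhom ev \<Longrightarrow> Fract p 1 = 0 \<Longrightarrow> ev p = 0"
  by (simp add: Fract_eq0 rhom_0)

lemma phF:
  assumes hv: "rhom ev"
  shows "phom (locD (\<lambda>p. Fract p 1) ev) (locf (\<lambda>p. Fract p 1) ev)"
proof -
  have k: "\<And>p. Fract p 1 = 0 \<Longrightarrow> ev p = 0" using ker_Fract[OF hv] .
  show ?thesis by (rule loc_phom[OF rhom_Fract hv k])
qed

lemma embF:
  assumes hv: "rhom ev"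
  shows "Fract p 1 \<in> locD (\<lambda>p. Fract p 1) ev \<and> locf (\<lambda>p. Fract p 1) ev (Fract p 1) = ev p"
proof -
  have k: "\<And>p. Fract p 1 = 0 \<Longrightarrow> ev p = 0" using ker_Fract[OF hv] .
  show ?thesis by (rule loc_emb[OF rhom_Fract hv k])
qed

lemma ph_nz: "phom S f \<Longrightarrow> x \<in> S \<and> f x = v \<Longrightarrow> v \<noteq> 0 \<Longrightarrow> x \<noteq> 0"
  using ph_0 by blast

lemma repF:
  fixes ev :: "'r::idom \<Rightarrow> 'l::comm_ring_1"
  assumes hv: "rhom ev"
   and gens: "\<forall>s\<in>T. s \<in> locD (\<lambda>p. Fract p 1) ev \<and> locf (\<lambda>p. Fract p 1) ev s \<in> G'"
   and ok: "grp_ok G'"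
   and rep: "pf_representable (gen_grp T) M"
  shows "pf_representable G' M"
proof -
  have ker: "\<forall>p. Fract p 1 = 0 \<longrightarrow> ev p = 0" using ker_Fract[OF hv] by blast
  show ?thesis by (rule rep_via_loc'[OF rhom_Fract hv ker gens ok rep])
qed

section \<open>H3 to H2\<close>

definition ev3 :: "rat poly \<Rightarrow> complex" where "ev3 = (\<lambda>p. poly (map_poly of_rat p) \<i>)"
lemma rhom_ev3: "rhom ev3" unfolding ev3_def by (rule rhom_poly[OF rhom_of_rat])

lemma H2_ok: "grp_ok H2"
proof -
  have "0 \<notin> {\<i>, 1 - \<i>}" by (auto simp: complex_eq_iff)
  then show ?thesis unfolding H2_def by (rule grp_ok_field)
qed

lemma rep32: "pf_representable H3 M \<Longrightarrow> pf_representable H2 M"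
proof -
  let ?S = "locD (\<lambda>p. Fract p 1) ev3" and ?f = "locf (\<lambda>p. Fract p 1) ev3"
  have ph: "phom ?S ?f" by (rule phF[OF rhom_ev3])
  have "ev3 [:0, 1:] = \<i>" unfolding ev3_def by (simp add: map_poly_pCons)
  then have a: "a3 \<in> ?S \<and> ?f a3 = \<i>" using embF[OF rhom_ev3, of "[:0, 1:]"] unfolding a3_def by simp
  have m1: "- 1 \<in> ?S \<and> ?f (- 1) = - 1" by (rule ph_uminus'[OF ph ph_one'[OF ph]])
  have t: "1 - a3 \<in> ?S \<and> ?f (1 - a3) = 1 - \<i>" by (rule ph_diff'[OF ph ph_one'[OF ph] a])
  have "a3 * a3 - a3 + 1 \<in> ?S \<and> ?f (a3 * a3 - a3 + 1) = \<i> * \<i> - \<i> + 1"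
    by (rule ph_add'[OF ph ph_diff'[OF ph ph_mult'[OF ph a a] a] ph_one'[OF ph]])
  then have sq: "a3^2 - a3 + 1 \<in> ?S \<and> ?f (a3^2 - a3 + 1) = \<i> * \<i> * \<i>"
    by (simp add: power2_eq_square)
  have gi: "\<i> \<in> H2" "1 - \<i> \<in> H2" unfolding H2_def by (simp_all add: gen_grp.gen)
  have gm1: "- 1 \<in> H2" using gen_grp.mult[OF gi(1)[unfolded H2_def] gi(1)[unfolded H2_def]] unfolding H2_def by simp
  have gs: "\<i> * \<i> * \<i> \<in> H2"
    unfolding H2_def by (intro gen_grp.mult gen_grp.gen) simp_all
  have gens: "\<forall>s\<in>{-1, a3, 1 - a3, a3^2 - a3 + 1}. s \<in> ?S \<and> ?f s \<in> H2"
    using m1 a t sq gi gm1 gs by auto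
  assume "pf_representable H3 M"
  then show ?thesis unfolding H3_def
    by (rule repF[OF rhom_ev3 gens H2_ok])
qed


lemma Fract01: "Fract 0 1 = 0" by (simp add: Zero_fract_def)
lemma Fract11: "Fract 1 1 = 1" by (simp add: One_fract_def)

lemma idt7:
  fixes x w :: "'a::comm_ring_1"
  assumes h: "(x - 1) * w = 1"
  shows "x + x * w - 2 * x * (x * w) = (-1) * x * x * w"
proof -
  have "x * w - w = 1" using h by (simp add: algebra_simps)
  then have a: "x * w = 1 + w" by (simp add: algebra_simps eq_diff_eq)
  have "x * (x * w) = x * (1 + w)" using a by simp
  also have "\<dots> = x + x * w" by (simp add: algebra_simps)
  finally have b: "x * (x * w) = x + x * w" .
  have "x + x * w - 2 * x * (x * w) = x + x * w - 2 * (x * (x * w))" by (simp add: mult.assoc)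
  also have "\<dots> = - (x * (x * w))" unfolding b by (simp add: algebra_simps)
  also have "\<dots> = (-1) * x * x * w" by (simp add: mult.assoc)
  finally show ?thesis .
qed

section \<open>H4 to H3\<close>

definition ev4 :: "rat poly poly \<Rightarrow> rat poly fract" where
  "ev4 = (\<lambda>p. poly (map_poly (\<lambda>c. Fract c 1) p) (a3 / (a3 - 1)))"
lemma rhom_ev4: "rhom ev4" unfolding ev4_def by (rule rhom_poly[OF rhom_Fract])

definition evq3 :: "rat poly \<Rightarrow> rat" where "evq3 = (\<lambda>p. poly p 2)"
lemma rhom_evq3: "rhom evq3" unfolding evq3_def by (rule rhom_eval)

lemma H3_nz: "a3 \<noteq> 0" "1 - a3 \<noteq> 0" "a3 - 1 \<noteq> 0" "a3^2 - a3 + 1 \<noteq> 0"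
proof -
  let ?S = "locD (\<lambda>p. Fract p 1) evq3" and ?f = "locf (\<lambda>p. Fract p 1) evq3"
  have ph: "phom ?S ?f" by (rule phF[OF rhom_evq3])
  have "evq3 [:0,1:] = 2" unfolding evq3_def by simp
  then have a: "a3 \<in> ?S \<and> ?f a3 = 2" using embF[OF rhom_evq3, of "[:0,1:]"] unfolding a3_def by simp
  show "a3 \<noteq> 0" by (rule ph_nz[OF ph a]) simp
  show "1 - a3 \<noteq> 0" by (rule ph_nz[OF ph ph_diff'[OF ph ph_one'[OF ph] a]]) simp
  show "a3 - 1 \<noteq> 0" by (rule ph_nz[OF ph ph_diff'[OF ph a ph_one'[OF ph]]]) simp
  have "a3 * a3 - a3 + 1 \<in> ?S \<and> ?f (a3 * a3 - a3 + 1) = 2 * 2 - 2 + 1"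
    by (rule ph_add'[OF ph ph_diff'[OF ph ph_mult'[OF ph a a] a] ph_one'[OF ph]])
  then have "a3 * a3 - a3 + 1 \<noteq> 0" by (rule ph_nz[OF ph]) simp
  then show "a3^2 - a3 + 1 \<noteq> 0" by (simp add: power2_eq_square)
qed

lemma H3_ok: "grp_ok H3"
proof -
  have "0 \<notin> {-1, a3, 1 - a3, a3^2 - a3 + 1}" using H3_nz by auto
  then show ?thesis unfolding H3_def by (rule grp_ok_field)
qed

lemma rep43: "pf_representable H4 M \<Longrightarrow> pf_representable H3 M"
proof -
  let ?S = "locD (\<lambda>p. Fract p 1) ev4" and ?f = "locf (\<lambda>p. Fract p 1) ev4"
  let ?t = "a3 / (a3 - 1)"
  have ph: "phom ?S ?f" by (rule phF[OF rhom_ev4])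
  have "ev4 [:[:0,1:]:] = a3" unfolding ev4_def a3_def by (simp add: map_poly_pCons Fract01)
  then have a: "a4 \<in> ?S \<and> ?f a4 = a3" using embF[OF rhom_ev4, of "[:[:0,1:]:]"] unfolding a4_def by simp
  have "ev4 [:0,1:] = ?t" unfolding ev4_def by (simp add: map_poly_pCons Fract01 Fract11)
  then have b: "b4 \<in> ?S \<and> ?f b4 = ?t" using embF[OF rhom_ev4, of "[:0,1:]"] unfolding b4_def by simp
  have one: "1 \<in> ?S \<and> ?f 1 = 1" by (rule ph_one'[OF ph])
  have "1 + 1 \<in> ?S \<and> ?f (1 + 1) = 1 + 1" by (rule ph_add'[OF ph one one])
  then have two: "2 \<in> ?S \<and> ?f 2 = 2" by simp
  have g1: "- 1 \<in> ?S \<and> ?f (- 1) = - 1" by (rule ph_uminus'[OF ph one])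
  have g4: "a4 - 1 \<in> ?S \<and> ?f (a4 - 1) = a3 - 1" by (rule ph_diff'[OF ph a one])
  have g5: "b4 - 1 \<in> ?S \<and> ?f (b4 - 1) = ?t - 1" by (rule ph_diff'[OF ph b one])
  have g6: "a4 * b4 - 1 \<in> ?S \<and> ?f (a4 * b4 - 1) = a3 * ?t - 1" by (rule ph_diff'[OF ph ph_mult'[OF ph a b] one])
  have g7: "a4 + b4 - 2 * a4 * b4 \<in> ?S \<and> ?f (a4 + b4 - 2 * a4 * b4) = a3 + ?t - 2 * a3 * ?t"
    by (rule ph_diff'[OF ph ph_add'[OF ph a b] ph_mult'[OF ph ph_mult'[OF ph two a] b]])
  note nz = H3_nz
  have h1: "- 1 \<in> H3" unfolding H3_def by (intro gen_grp.gen) simp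
  have h2: "a3 \<in> H3" unfolding H3_def by (intro gen_grp.gen) simp
  have m3: "a3 * inverse ((-1) * (1 - a3)) \<in> H3"
    unfolding H3_def by (intro gen_grp.mult gen_grp.inv gen_grp.gen) simp_all
  have "?t = a3 * inverse ((-1) * (1 - a3))" using nz by (simp add: field_simps)
  then have h3: "?t \<in> H3" using m3 by (simp only:)
  have m4: "(-1) * (1 - a3) \<in> H3"
    unfolding H3_def by (intro gen_grp.mult gen_grp.inv gen_grp.gen) simp_all
  have "a3 - 1 = (-1) * (1 - a3)" by simp
  then have h4: "a3 - 1 \<in> H3" using m4 by (simp only:)
  have m5: "inverse ((-1) * (1 - a3)) \<in> H3"
    unfolding H3_def by (intro gen_grp.mult gen_grp.inv gen_grp.gen) simp_all
  have "?t - 1 = inverse ((-1) * (1 - a3))" using nz by (simp add: field_simps)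
  then have h5: "?t - 1 \<in> H3" using m5 by (simp only:)
  have m6: "(a3^2 - a3 + 1) * inverse ((-1) * (1 - a3)) \<in> H3"
    unfolding H3_def by (intro gen_grp.mult gen_grp.inv gen_grp.gen) simp_all
  have "a3 * ?t - 1 = (a3^2 - a3 + 1) * inverse ((-1) * (1 - a3))" using nz
    by (simp add: field_simps power2_eq_square)
  then have h6: "a3 * ?t - 1 \<in> H3" using m6 by (simp only:)
  have m7: "(-1) * a3 * a3 * inverse ((-1) * (1 - a3)) \<in> H3"
    unfolding H3_def by (intro gen_grp.mult gen_grp.inv gen_grp.gen) simp_all
  have iv: "(-1) * (1 - a3) = a3 - 1" by simp
  have tw: "?t = a3 * inverse (a3 - 1)" by (simp add: divide_inverse)
  have w: "(a3 - 1) * inverse (a3 - 1) = 1" using nz by simp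
  have "a3 + a3 * inverse (a3 - 1) - 2 * a3 * (a3 * inverse (a3 - 1)) = (-1) * a3 * a3 * inverse (a3 - 1)"
    using idt7[OF w] .
  then have "a3 + ?t - 2 * a3 * ?t = (-1) * a3 * a3 * inverse (a3 - 1)" unfolding tw .
  then have "a3 + ?t - 2 * a3 * ?t = (-1) * a3 * a3 * inverse ((-1) * (1 - a3))" unfolding iv .
  then have h7: "a3 + ?t - 2 * a3 * ?t \<in> H3" using m7 by (simp only:)
  have gens: "\<forall>s\<in>{-1, a4, b4, a4 - 1, b4 - 1, a4 * b4 - 1, a4 + b4 - 2 * a4 * b4}. s \<in> ?S \<and> ?f s \<in> H3"
    using g1 a b g4 g5 g6 g7 h1 h2 h3 h4 h5 h6 h7 by auto
  assume "pf_representable H4 M"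
  then show ?thesis unfolding H4_def
    by (rule repF[OF rhom_ev4 gens H3_ok])
qed


section \<open>H5 to H4\<close>

definition hc5 :: "rat \<Rightarrow> rat poly poly fract" where "hc5 = (\<lambda>c. Fract [:[:c:]:] 1)"
definition h15 :: "rat poly \<Rightarrow> rat poly poly fract" where "h15 = (\<lambda>r. poly (map_poly hc5 r) (inverse a4))"
definition h25 :: "rat poly poly \<Rightarrow> rat poly poly fract" where "h25 = (\<lambda>q. poly (map_poly h15 q) b4)"
definition ev5 :: "rat poly poly poly \<Rightarrow> rat poly poly fract" where "ev5 = (\<lambda>p. poly (map_poly h25 p) b4)"

lemma rhom_hc5: "rhom hc5" unfolding hc5_def
  by (rule rhom_comp[OF rhom_Fract rhom_comp[OF rhom_const rhom_const]])
lemma rhom_h15: "rhom h15" unfolding h15_def by (rule rhom_poly[OF rhom_hc5])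
lemma rhom_h25: "rhom h25" unfolding h25_def by (rule rhom_poly[OF rhom_h15])
lemma rhom_ev5: "rhom ev5" unfolding ev5_def by (rule rhom_poly[OF rhom_h25])

lemma hc5_0: "hc5 0 = 0" using rhom_0[OF rhom_hc5] .
lemma hc5_1: "hc5 1 = 1" using rhom_1[OF rhom_hc5] .
lemma h15_0: "h15 0 = 0" using rhom_0[OF rhom_h15] .
lemma h15_1: "h15 1 = 1" using rhom_1[OF rhom_h15] .
lemma h25_0: "h25 0 = 0" using rhom_0[OF rhom_h25] .
lemma h25_1: "h25 1 = 1" using rhom_1[OF rhom_h25] .

lemma h15_x: "h15 [:0, 1:] = inverse a4"
  unfolding h15_def by (simp add: map_poly_pCons hc5_0 hc5_1)
lemma h25_x: "h25 [:0, 1:] = b4"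
  unfolding h25_def by (simp add: map_poly_pCons h15_0 h15_1)
lemma h25_c: "h25 [:q:] = h15 q"
  unfolding h25_def by (simp add: map_poly_pCons h15_0)
lemma ev5_c: "ev5 [:q:] = h25 q"
  unfolding ev5_def by (simp add: map_poly_pCons h25_0)
lemma ev5_x: "ev5 [:0, 1:] = b4"
  unfolding ev5_def by (simp add: map_poly_pCons h25_0 h25_1)

definition evq4 :: "rat poly poly \<Rightarrow> rat" where "evq4 = (\<lambda>p. poly (map_poly (\<lambda>q. poly q 2) p) 3)"
lemma rhom_evq4: "rhom evq4" unfolding evq4_def by (rule rhom_poly[OF rhom_eval])

lemma H4_nz: "a4 \<noteq> 0" "b4 \<noteq> 0" "a4 - 1 \<noteq> 0" "b4 - 1 \<noteq> 0" "a4 * b4 - 1 \<noteq> 0"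
  "a4 + b4 - 2 * a4 * b4 \<noteq> 0"
proof -
  let ?S = "locD (\<lambda>p. Fract p 1) evq4" and ?f = "locf (\<lambda>p. Fract p 1) evq4"
  have ph: "phom ?S ?f" by (rule phF[OF rhom_evq4])
  have "evq4 [:[:0,1:]:] = 2" unfolding evq4_def by (simp add: map_poly_pCons)
  then have a: "a4 \<in> ?S \<and> ?f a4 = 2" using embF[OF rhom_evq4, of "[:[:0,1:]:]"] unfolding a4_def by simp
  have "evq4 [:0,1:] = 3" unfolding evq4_def by (simp add: map_poly_pCons)
  then have b: "b4 \<in> ?S \<and> ?f b4 = 3" using embF[OF rhom_evq4, of "[:0,1:]"] unfolding b4_def by simp
  have one: "1 \<in> ?S \<and> ?f 1 = 1" by (rule ph_one'[OF ph])
  have "1 + 1 \<in> ?S \<and> ?f (1 + 1) = 1 + 1" by (rule ph_add'[OF ph one one])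
  then have two: "2 \<in> ?S \<and> ?f 2 = 2" by simp
  show "a4 \<noteq> 0" by (rule ph_nz[OF ph a]) simp
  show "b4 \<noteq> 0" by (rule ph_nz[OF ph b]) simp
  show "a4 - 1 \<noteq> 0" by (rule ph_nz[OF ph ph_diff'[OF ph a one]]) simp
  show "b4 - 1 \<noteq> 0" by (rule ph_nz[OF ph ph_diff'[OF ph b one]]) simp
  show "a4 * b4 - 1 \<noteq> 0" by (rule ph_nz[OF ph ph_diff'[OF ph ph_mult'[OF ph a b] one]]) simp
  show "a4 + b4 - 2 * a4 * b4 \<noteq> 0"
    by (rule ph_nz[OF ph ph_diff'[OF ph ph_add'[OF ph a b] ph_mult'[OF ph ph_mult'[OF ph two a] b]]]) simp
qed

lemma H4_ok: "grp_ok H4"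
proof -
  have "0 \<notin> {-1, a4, b4, a4 - 1, b4 - 1, a4 * b4 - 1, a4 + b4 - 2 * a4 * b4}" using H4_nz by auto
  then show ?thesis unfolding H4_def by (rule grp_ok_field)
qed

lemma rep54: "pf_representable H5 M \<Longrightarrow> pf_representable H4 M"
proof -
  let ?S = "locD (\<lambda>p. Fract p 1) ev5" and ?f = "locf (\<lambda>p. Fract p 1) ev5"
  let ?A = "a4" and ?B = "b4"
  have ph: "phom ?S ?f" by (rule phF[OF rhom_ev5])
  have "ev5 [:[:[:0,1:]:]:] = inverse a4" by (simp add: ev5_c h25_c h15_x)
  then have a: "a5 \<in> ?S \<and> ?f a5 = inverse a4"
    using embF[OF rhom_ev5, of "[:[:[:0,1:]:]:]"] unfolding a5_def by simp
  have "ev5 [:[:0,1:]:] = b4" by (simp add: ev5_c h25_x)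
  then have b: "b5 \<in> ?S \<and> ?f b5 = b4"
    using embF[OF rhom_ev5, of "[:[:0,1:]:]"] unfolding b5_def by simp
  have c: "c5 \<in> ?S \<and> ?f c5 = b4"
    using embF[OF rhom_ev5, of "[:0,1:]"] ev5_x unfolding c5_def by simp
  have one: "1 \<in> ?S \<and> ?f 1 = 1" by (rule ph_one'[OF ph])
  have g1: "- 1 \<in> ?S \<and> ?f (- 1) = - 1" by (rule ph_uminus'[OF ph one])
  have g5: "a5 - 1 \<in> ?S \<and> ?f (a5 - 1) = inverse a4 - 1" by (rule ph_diff'[OF ph a one])
  have g6: "b5 - 1 \<in> ?S \<and> ?f (b5 - 1) = b4 - 1" by (rule ph_diff'[OF ph b one])
  have g7: "c5 - 1 \<in> ?S \<and> ?f (c5 - 1) = b4 - 1" by (rule ph_diff'[OF ph c one])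
  have g8: "a5 - c5 \<in> ?S \<and> ?f (a5 - c5) = inverse a4 - b4" by (rule ph_diff'[OF ph a c])
  have g9: "c5 - a5 * b5 \<in> ?S \<and> ?f (c5 - a5 * b5) = b4 - inverse a4 * b4"
    by (rule ph_diff'[OF ph c ph_mult'[OF ph a b]])
  have g10: "(1 - c5) - (1 - a5) * b5 \<in> ?S \<and> ?f ((1 - c5) - (1 - a5) * b5) = (1 - b4) - (1 - inverse a4) * b4"
    by (rule ph_diff'[OF ph ph_diff'[OF ph one c] ph_mult'[OF ph ph_diff'[OF ph one a] b]])
  note nz = H4_nz
  have h1: "- 1 \<in> H4" unfolding H4_def by (intro gen_grp.gen) simp
  have h2: "inverse a4 \<in> H4" unfolding H4_def by (intro gen_grp.inv gen_grp.gen) simp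
  have h3: "b4 \<in> H4" unfolding H4_def by (intro gen_grp.gen) simp
  have h6: "b4 - 1 \<in> H4" unfolding H4_def by (intro gen_grp.gen) simp
  have m5: "(-1) * (a4 - 1) * inverse a4 \<in> H4"
    unfolding H4_def by (intro gen_grp.mult gen_grp.inv gen_grp.gen) simp_all
  have "inverse a4 - 1 = (-1) * (a4 - 1) * inverse a4" using nz by (simp add: field_simps)
  then have h5: "inverse a4 - 1 \<in> H4" using m5 by (simp only:)
  have m8: "(-1) * (a4 * b4 - 1) * inverse a4 \<in> H4"
    unfolding H4_def by (intro gen_grp.mult gen_grp.inv gen_grp.gen) simp_all
  have "inverse a4 - b4 = (-1) * (a4 * b4 - 1) * inverse a4" using nz by (simp add: field_simps)
  then have h8: "inverse a4 - b4 \<in> H4" using m8 by (simp only:)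
  have m9: "b4 * (a4 - 1) * inverse a4 \<in> H4"
    unfolding H4_def by (intro gen_grp.mult gen_grp.inv gen_grp.gen) simp_all
  have "b4 - inverse a4 * b4 = b4 * (a4 - 1) * inverse a4" using nz by (simp add: field_simps)
  then have h9: "b4 - inverse a4 * b4 \<in> H4" using m9 by (simp only:)
  have m10: "(a4 + b4 - 2 * a4 * b4) * inverse a4 \<in> H4"
    unfolding H4_def by (intro gen_grp.mult gen_grp.inv gen_grp.gen) simp_all
  have "(1 - b4) - (1 - inverse a4) * b4 = (a4 + b4 - 2 * a4 * b4) * inverse a4" using nz
    by (simp add: field_simps)
  then have h10: "(1 - b4) - (1 - inverse a4) * b4 \<in> H4" using m10 by (simp only:)
  have gens: "\<forall>s\<in>{-1, a5, b5, c5, a5 - 1, b5 - 1, c5 - 1, a5 - c5, c5 - a5 * b5,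
                 (1 - c5) - (1 - a5) * b5}. s \<in> ?S \<and> ?f s \<in> H4"
    using g1 a b c g5 g6 g7 g8 g9 g10 h1 h2 h3 h5 h6 h8 h9 h10 by auto
  assume "pf_representable H5 M"
  then show ?thesis unfolding H5_def
    by (rule repF[OF rhom_ev5 gens H4_ok])
qed

lemma rep_down: "i \<in> {1..4} \<Longrightarrow> hydra_rep (Suc i) M \<Longrightarrow> hydra_rep i M"
proof -
  assume i: "i \<in> {1..4}" and r: "hydra_rep (Suc i) M"
  then have "i = 1 \<or> i = 2 \<or> i = 3 \<or> i = 4" by auto
  then show "hydra_rep i M"
  proof (elim disjE)
    assume "i = 1" then show ?thesis using r rep21 unfolding hydra_rep_def by simp
  next
    assume "i = 2" then show ?thesis using r rep32 unfolding hydra_rep_def by simp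
  next
    assume "i = 3" then show ?thesis using r rep43 unfolding hydra_rep_def by simp
  next
    assume "i = 4" then show ?thesis using r rep54 unfolding hydra_rep_def by simp
  qed
qed


theorem lemma5p1:
  fixes M :: "'a matroid" and i :: nat
  assumes "i \<in> {1..4}"
    and "excluded_minor_hydra i M"
  shows "(\<exists>N (N' :: 'a matroid). minor_of N M \<and> in_N i N' \<and> matroid_iso N N')
         \<or> excluded_minor_hydra (Suc i) M"
proof -
  have M: "is_matroid M" and nrep: "\<not> hydra_rep i M"
    and pm: "\<And>N. proper_minor_of N M \<Longrightarrow> hydra_rep i N"
    using assms(2) unfolding excluded_minor_hydra_def by auto
  have nrep1: "\<not> hydra_rep (Suc i) M" using rep_down[OF assms(1)] nrep by blast
  show ?thesis
  proof (cases "\<forall>N. proper_minor_of N M \<longrightarrow> hydra_rep (Suc i) N")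
    case True
    then have "excluded_minor_hydra (Suc i) M" unfolding excluded_minor_hydra_def using M nrep1 by blast
    then show ?thesis by blast
  next
    case False
    then obtain P where P: "proper_minor_of P M \<and> \<not> hydra_rep (Suc i) P" by blast
    let ?Q = "\<lambda>N. proper_minor_of N M \<and> \<not> hydra_rep (Suc i) N"
    obtain N where N: "?Q N" and Nmin: "\<forall>N'. ?Q N' \<longrightarrow> card (fst N) \<le> card (fst N')"
      using ex_has_least_nat[of ?Q P "\<lambda>N. card (fst N)", OF P] by blast
    have mN: "minor_of N M" and neq: "fst N \<noteq> fst M" using N unfolding proper_minor_of_def by auto
    have NM: "is_matroid N" by (rule minor_is_matroid[OF M mN])
    have sub: "fst N \<subseteq> fst M" using mN unfolding minor_of_def by auto
    have fin: "finite (fst M)" by (rule M_fin[OF M])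
    have finN: "finite (fst N)" using sub fin finite_subset by blast
    have cNM: "card (fst N) \<le> card (fst M)" using sub fin by (rule card_mono[rotated])
    have inN: "in_N i N"
      unfolding in_N_def excluded_minor_hydra_def
    proof (intro conjI allI impI)
      show "is_matroid N" by (rule NM)
      show "\<not> hydra_rep (Suc i) N" using N by blast
      show "hydra_rep i N" using pm N by blast
      fix N2 assume N2: "proper_minor_of N2 N"
      have m2: "minor_of N2 N" and neq2: "fst N2 \<noteq> fst N" using N2 unfolding proper_minor_of_def by auto
      have sub2: "fst N2 \<subseteq> fst N" using m2 unfolding minor_of_def by auto
      have mM: "minor_of N2 M" by (rule minor_trans[OF M mN m2])
      have "fst N2 \<subset> fst N" using sub2 neq2 by blast
      then have lt: "card (fst N2) < card (fst N)" using finN by (rule psubset_card_mono[rotated])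
      have "fst N2 \<noteq> fst M" using lt cNM by auto
      then have pM: "proper_minor_of N2 M" using mM unfolding proper_minor_of_def by blast
      show "hydra_rep (Suc i) N2"
      proof (rule ccontr)
        assume "\<not> hydra_rep (Suc i) N2"
        then have "card (fst N) \<le> card (fst N2)" using Nmin pM by blast
        with lt show False by simp
      qed
    qed
    have "matroid_iso N N" unfolding matroid_iso_def by (intro exI[of _ id]) simp
    then show ?thesis using mN inN by blast
  qed
qed

end
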